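(* For every integer $i\ge0$, $D_{p^i-1}E=E^{p^i}$.
   Context: Let $q$ be a power of a prime $p$, $A=\mathbb F_q[T]$, $K_\infty=\mathbb F_q((1/T))$, $C$ the completion of an algebraic closure of $K_\infty$, $\Omega=C\setminus K_\infty$, $\bar\pi$ a fundamental period of the Carlitz module. $E(z)=\bar\pi^{-1}\sum_{a\in A\text{ monic}}\sum_{b\in A}\frac{a}{az+b}$ on $\Omega$. For holomorphic $f$, $\mathcal D_nf$ is defined by $f(z+\varepsilon)=\sum_n(\mathcal D_nf)(z)\varepsilon^n$ for small $\varepsilon\in C$, and $D_n=(-\bar\pi)^{-n}\mathcal D_n$. *)

theory Defs
  imports "HOL-Computational_Algebra.Computational_Algebra" "HOL-Library.Cardinality"
begin

definition av_conv :: "('c::field \<Rightarrow> real) \<Rightarrow> (nat \<Rightarrow> 'c) \<Rightarrow> 'c \<Rightarrow> bool" where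
  "av_conv av s L \<longleftrightarrow> (\<forall>e>0. \<exists>N. \<forall>n\<ge>N. av (s n - L) < e)"

definition av_lim :: "('c::field \<Rightarrow> real) \<Rightarrow> (nat \<Rightarrow> 'c) \<Rightarrow> 'c" where
  "av_lim av s = (THE L. av_conv av s L)"

definition av_sums :: "('c::field \<Rightarrow> real) \<Rightarrow> (nat \<Rightarrow> 'c) \<Rightarrow> 'c \<Rightarrow> bool" where
  "av_sums av f L \<longleftrightarrow> av_conv av (\<lambda>n. \<Sum>i<n. f i) L"

text \<open>K_infinity = F_q((1/T)) is modelled as Laurent series in X = 1/T;
  a polynomial a(T) in A = F_q[T] is mapped to a(1/X).\<close>
definition polyK :: "'k::field poly \<Rightarrow> 'k fls" where
  "polyK a = poly (map_poly fls_const a) fls_X_inv"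

text \<open>(av, iota) is a model of C: iota embeds K_infinity into a complete,
  algebraically closed, non-archimedean valued field 'c, extending the
  absolute value |f| = q^(-v(f)) of K_infinity (so |T| = q), in which the
  elements algebraic over K_infinity are dense (i.e. 'c is the completion of
  an algebraic closure of K_infinity).\<close>
definition is_C :: "('c::field \<Rightarrow> real) \<Rightarrow> ('k::{finite,field} fls \<Rightarrow> 'c) \<Rightarrow> bool" where
  "is_C av \<iota> \<longleftrightarrow>
     (\<forall>x. av x \<ge> 0) \<and> (\<forall>x. av x = 0 \<longleftrightarrow> x = 0) \<and>
     (\<forall>x y. av (x * y) = av x * av y) \<and>
     (\<forall>x y. av (x + y) \<le> max (av x) (av y)) \<and>
     (\<forall>f g. \<iota> (f + g) = \<iota> f + \<iota> g) \<and> (\<forall>f g. \<iota> (f * g) = \<iota> f * \<iota> g) \<and> \<iota> 1 = 1 \<and>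
     (\<forall>f. f \<noteq> 0 \<longrightarrow> av (\<iota> f) = real (CARD('k)) powr (- real_of_int (fls_subdegree f))) \<and>
     (\<forall>s. (\<forall>e>0. \<exists>N. \<forall>m\<ge>N. \<forall>n\<ge>N. av (s m - s n) < e) \<longrightarrow> (\<exists>L. av_conv av s L)) \<and>
     (\<forall>P::'c poly. degree P \<ge> 1 \<longrightarrow> (\<exists>y. poly P y = 0)) \<and>
     (\<forall>c e. e > 0 \<longrightarrow> (\<exists>y. av (c - y) < e \<and>
        (\<exists>P::'k fls poly. P \<noteq> 0 \<and> poly (map_poly \<iota> P) y = 0)))"

text \<open>Carlitz D_i = prod_{j<i} (T^(q^i) - T^(q^j)), and the Carlitz exponential
  e_C(z) = sum_i z^(q^i)/D_i; a fundamental period is a generator of its kernel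
  as an A-module: ker e_C = pibar A.\<close>
definition carlitz_D :: "nat \<Rightarrow> 'k::{finite,field} poly" where
  "carlitz_D i = (\<Prod>j<i. monom 1 (CARD('k) ^ i) - monom 1 (CARD('k) ^ j))"

definition fundamental_period ::
  "('c::field \<Rightarrow> real) \<Rightarrow> ('k::{finite,field} fls \<Rightarrow> 'c) \<Rightarrow> 'c \<Rightarrow> bool" where
  "fundamental_period av \<iota> pibar \<longleftrightarrow> pibar \<noteq> 0 \<and>
     {z. av_sums av (\<lambda>i. z ^ (CARD('k) ^ i) / \<iota> (polyK (carlitz_D i :: 'k poly))) 0}
       = range (\<lambda>a::'k poly. \<iota> (polyK a) * pibar)"

definition Omega :: "('k::{finite,field} fls \<Rightarrow> 'c::field) \<Rightarrow> 'c set" where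
  "Omega \<iota> = - range \<iota>"

definition Eis :: "('c::field \<Rightarrow> real) \<Rightarrow> ('k::{finite,field} fls \<Rightarrow> 'c) \<Rightarrow> 'c \<Rightarrow> 'c \<Rightarrow> 'c" where
  "Eis av \<iota> pibar z = inverse pibar *
     av_lim av (\<lambda>N. \<Sum>a\<in>{a::'k poly. lead_coeff a = 1 \<and> degree a < N}.
        av_lim av (\<lambda>M. \<Sum>b\<in>{b::'k poly. degree b < M}.
           \<iota> (polyK a) / (\<iota> (polyK a) * z + \<iota> (polyK b))))"

definition hyperderiv :: "('c::field \<Rightarrow> real) \<Rightarrow> ('c \<Rightarrow> 'c) \<Rightarrow> nat \<Rightarrow> 'c \<Rightarrow> 'c" where
  "hyperderiv av f n z = (THE c. \<exists>r>0. \<forall>\<epsilon>. av \<epsilon> < r \<longrightarrow>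
       av_sums av (\<lambda>k. c k * \<epsilon> ^ k) (f (z + \<epsilon>))) n"

end

theory Submission
  imports Defs
begin

unbundle fps_syntax

locale vfield =
  fixes av :: "'c::field \<Rightarrow> real"
  assumes nonneg: "av x \<ge> 0" and zero_iff: "av x = 0 \<longleftrightarrow> x = 0"
    and mult: "av (x * y) = av x * av y" and ultra: "av (x + y) \<le> max (av x) (av y)"
    and complete: "(\<forall>e>0. \<exists>N. \<forall>m\<ge>N. \<forall>n\<ge>N. av (s m - s n) < e) \<Longrightarrow> (\<exists>L. av_conv av s L)"
begin

lemma av_0[simp]: "av 0 = 0" using zero_iff by simp

lemma av_pos: "x \<noteq> 0 \<Longrightarrow> av x > 0"
  using nonneg[of x] zero_iff[of x] by linarith

lemma av_1[simp]: "av 1 = 1"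
proof -
  have "av 1 = av 1 * av 1" using mult[of 1 1] by simp
  moreover have "av 1 \<noteq> 0" using zero_iff by simp
  ultimately show ?thesis by (metis mult_cancel_left1)
qed

lemma av_minus[simp]: "av (- x) = av x"
proof -
  have "av (-1) * av (-1) = 1" using mult[of "-1" "-1"] by simp
  hence "av (-1) = 1" using nonneg[of "-1"]
    by (metis abs_of_nonneg power2_eq_square real_sqrt_abs real_sqrt_one)
  thus ?thesis using mult[of "-1" x] by simp
qed

lemma av_diff_comm: "av (x - y) = av (y - x)"
  by (metis av_minus minus_diff_eq)

lemma av_inverse[simp]: "av (inverse x) = inverse (av x)"
proof (cases "x = 0")
  case False
  have "av (inverse x) * av x = 1" using mult[of "inverse x" x] False by simp
  thus ?thesis by (metis inverse_unique mult.commute)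
qed simp

lemma av_divide[simp]: "av (x / y) = av x / av y"
  by (simp add: divide_inverse mult)

lemma av_power[simp]: "av (x ^ n) = av x ^ n"
  by (induction n) (simp_all add: mult)

lemma av_mult[simp]: "av (x * y) = av x * av y" by (rule mult)

lemma av_diff_le: "av (x - y) \<le> max (av x) (av y)"
  using ultra[of x "-y"] by simp

lemma av_add_eq: "av x < av y \<Longrightarrow> av (x + y) = av y"
proof -
  assume a: "av x < av y"
  have "av y \<le> max (av (x + y)) (av (- x))" using ultra[of "x + y" "-x"] by simp
  hence "av y \<le> av (x + y)" using a by auto
  moreover have "av (x + y) \<le> av y" using ultra[of x y] a by auto
  ultimately show ?thesis by simp
qed

lemma av_add_eq': "av y < av x \<Longrightarrow> av (x + y) = av x"
  using av_add_eq[of y x] by (simp add: add.commute)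

lemma av_add_le: "av x \<le> B \<Longrightarrow> av y \<le> B \<Longrightarrow> av (x + y) \<le> B"
  using ultra[of x y] by simp

lemma av_diff_leB: "av x \<le> B \<Longrightarrow> av y \<le> B \<Longrightarrow> av (x - y) \<le> B"
  using av_diff_le[of x y] by simp

lemma av_add_lt: "av x < B \<Longrightarrow> av y < B \<Longrightarrow> av (x + y) < B"
  using ultra[of x y] by simp

lemma av_sum_le:
  assumes "\<And>i. i \<in> S \<Longrightarrow> av (f i) \<le> B" and "B \<ge> 0"
  shows "av (sum f S) \<le> B"
  using assms
proof (induction S rule: infinite_finite_induct)
  case (insert x F)
  then show ?case by (simp add: av_add_le)
qed simp_all

lemma av_sum_lt:
  assumes "\<And>i. i \<in> S \<Longrightarrow> av (f i) < B" and "B > 0"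
  shows "av (sum f S) < B"
  using assms
proof (induction S rule: infinite_finite_induct)
  case (insert x F)
  then show ?case by (simp add: av_add_lt)
qed simp_all

lemma av_sum_eq_zero: "av x \<le> 0 \<Longrightarrow> x = 0"
  using nonneg[of x] zero_iff[of x] by simp

lemma le_by_eps: "(\<And>e. e > 0 \<Longrightarrow> (a::real) \<le> max e B) \<Longrightarrow> B \<ge> 0 \<Longrightarrow> a \<le> B"
proof (rule ccontr)
  assume a: "\<And>e. e > 0 \<Longrightarrow> (a::real) \<le> max e B" "B \<ge> 0" "\<not> a \<le> B"
  have "(a + B)/2 > 0" using a by simp
  hence "a \<le> max ((a + B)/2) B" using a(1) by blast
  thus False using a by (auto simp: max_def split: if_splits)
qed

lemma conv_unique: "av_conv av s L \<Longrightarrow> av_conv av s L' \<Longrightarrow> L = L'"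
proof -
  assume a: "av_conv av s L" "av_conv av s L'"
  have "av (L - L') \<le> 0"
  proof (rule le_by_eps)
    fix e :: real assume "e > 0"
    obtain N1 where "\<forall>n\<ge>N1. av (s n - L) < e" using a(1) \<open>e>0\<close> unfolding av_conv_def by blast
    moreover obtain N2 where "\<forall>n\<ge>N2. av (s n - L') < e" using a(2) \<open>e>0\<close> unfolding av_conv_def by blast
    ultimately have "av (s (max N1 N2) - L) < e" "av (s (max N1 N2) - L') < e" by auto
    hence "av ((s (max N1 N2) - L') - (s (max N1 N2) - L)) \<le> e"
      by (intro av_diff_leB[of "s (max N1 N2) - L'" e "s (max N1 N2) - L"]) auto
    thus "av (L - L') \<le> max e 0" by (simp add: algebra_simps)
  qed simp
  thus ?thesis using av_sum_eq_zero[of "L - L'"] by simp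
qed

lemma av_lim_eq: "av_conv av s L \<Longrightarrow> av_lim av s = L"
  unfolding av_lim_def using conv_unique by blast

lemma conv_const: "av_conv av (\<lambda>n. c) c"
  unfolding av_conv_def by simp

lemma conv_add: "av_conv av s L \<Longrightarrow> av_conv av t M \<Longrightarrow> av_conv av (\<lambda>n. s n + t n) (L + M)"
  unfolding av_conv_def
proof (intro allI impI)
  fix e :: real assume a: "\<forall>e>0. \<exists>N. \<forall>n\<ge>N. av (s n - L) < e" "\<forall>e>0. \<exists>N. \<forall>n\<ge>N. av (t n - M) < e" "e > 0"
  obtain N1 where "\<forall>n\<ge>N1. av (s n - L) < e" using a by blast
  moreover obtain N2 where "\<forall>n\<ge>N2. av (t n - M) < e" using a by blast
  ultimately have "\<forall>n\<ge>max N1 N2. av ((s n - L) + (t n - M)) < e"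
    by (intro allI impI av_add_lt) auto
  moreover have "\<And>n. (s n - L) + (t n - M) = s n + t n - (L + M)" by (simp add: algebra_simps)
  ultimately show "\<exists>N. \<forall>n\<ge>N. av (s n + t n - (L + M)) < e" by metis
qed

lemma conv_minus: "av_conv av s L \<Longrightarrow> av_conv av (\<lambda>n. - s n) (- L)"
  unfolding av_conv_def by (metis av_minus minus_diff_eq minus_diff_minus)

lemma conv_diff: "av_conv av s L \<Longrightarrow> av_conv av t M \<Longrightarrow> av_conv av (\<lambda>n. s n - t n) (L - M)"
  using conv_add[of s L "\<lambda>n. - t n" "- M"] conv_minus[of t M] by simp

lemma conv_mult_const: "av_conv av s L \<Longrightarrow> av_conv av (\<lambda>n. s n * c) (L * c)"
proof (cases "c = 0")
  case True then show ?thesis by (simp add: conv_const)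
next
  case False
  assume a: "av_conv av s L"
  show ?thesis unfolding av_conv_def
  proof (intro allI impI)
    fix e :: real assume "e > 0"
    hence "e / av c > 0" using av_pos[OF False] by simp
    then obtain N where "\<forall>n\<ge>N. av (s n - L) < e / av c" using a unfolding av_conv_def by blast
    have "\<forall>n\<ge>N. av (s n * c - L * c) < e"
    proof (intro allI impI)
      fix n assume "n \<ge> N"
      hence "av (s n - L) < e / av c" using \<open>\<forall>n\<ge>N. av (s n - L) < e / av c\<close> by blast
      hence "av (s n - L) * av c < e" using av_pos[OF False] by (simp add: pos_less_divide_eq)
      moreover have "s n * c - L * c = (s n - L) * c" by (simp add: algebra_simps)
      ultimately show "av (s n * c - L * c) < e" by (simp only: mult)
    qed
    thus "\<exists>N. \<forall>n\<ge>N. av (s n * c - L * c) < e" by blast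
  qed
qed

lemma conv_const_mult: "av_conv av s L \<Longrightarrow> av_conv av (\<lambda>n. c * s n) (c * L)"
  using conv_mult_const[of s L c] by (simp add: mult.commute)

lemma conv_sum: "finite S \<Longrightarrow> (\<And>i. i \<in> S \<Longrightarrow> av_conv av (f i) (L i)) \<Longrightarrow>
   av_conv av (\<lambda>n. \<Sum>i\<in>S. f i n) (\<Sum>i\<in>S. L i)"
proof (induction S rule: finite_induct)
  case empty then show ?case by (simp add: conv_const)
next
  case (insert x F)
  then show ?case by (simp add: conv_add)
qed

lemma conv_limit_bound:
  assumes "av_conv av s L" "\<And>m. m \<ge> N \<Longrightarrow> av (s m - y) \<le> B"
  shows "av (L - y) \<le> B"
proof -
  have B: "B \<ge> 0" using assms(2)[of N] nonneg[of "s N - y"] by simp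
  show ?thesis
  proof (rule le_by_eps[OF _ B])
    fix e :: real assume "e > 0"
    then obtain N1 where "\<forall>n\<ge>N1. av (s n - L) < e" using assms(1) unfolding av_conv_def by blast
    hence "av (s (max N N1) - L) < e" by simp
    moreover have "av (s (max N N1) - y) \<le> B" using assms(2) by simp
    ultimately have "av ((s (max N N1) - y) - (s (max N N1) - L)) \<le> max e B"
      by (intro av_diff_leB[of "s (max N N1) - y" "max e B" "s (max N N1) - L"]) auto
    thus "av (L - y) \<le> max e B" by (simp add: algebra_simps)
  qed
qed

lemma cauchy_conv:
  assumes "\<And>N m. N \<ge> Nz \<Longrightarrow> m \<ge> N \<Longrightarrow> av (S m - S N) \<le> B N"
    and "\<And>e. e > 0 \<Longrightarrow> \<exists>N. \<forall>n\<ge>N. B n < e"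
  shows "\<exists>L. av_conv av S L \<and> (\<forall>N\<ge>Nz. av (L - S N) \<le> B N)"
proof -
  have "\<exists>L. av_conv av S L"
  proof (rule complete, intro allI impI)
    fix e :: real assume "e > 0"
    then obtain N1 where N1: "\<forall>n\<ge>N1. B n < e" using assms(2) by blast
    let ?N = "max Nz N1"
    have "\<forall>m\<ge>?N. \<forall>n\<ge>?N. av (S m - S n) < e"
    proof (intro allI impI)
      fix m n assume "m \<ge> ?N" "n \<ge> ?N"
      hence "av (S m - S ?N) \<le> B ?N" "av (S n - S ?N) \<le> B ?N" using assms(1) by auto
      moreover have "B ?N < e" using N1 by simp
      ultimately have "av ((S m - S ?N) - (S n - S ?N)) < e"
        by (intro av_diff_le[THEN order.strict_trans1]) auto
      thus "av (S m - S n) < e" by simp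
    qed
    thus "\<exists>N. \<forall>m\<ge>N. \<forall>n\<ge>N. av (S m - S n) < e" by blast
  qed
  then obtain L where L: "av_conv av S L" by blast
  have "\<forall>N\<ge>Nz. av (L - S N) \<le> B N"
    using conv_limit_bound[OF L] assms(1) by blast
  with L show ?thesis by blast
qed

lemma sums_exists:
  assumes "\<And>e. e > 0 \<Longrightarrow> \<exists>K. \<forall>n\<ge>K. av (f n) < e"
  shows "\<exists>L. av_sums av f L"
  unfolding av_sums_def
proof (rule complete, intro allI impI)
  fix e :: real assume "e > 0"
  then obtain K where K: "\<forall>n\<ge>K. av (f n) < e" using assms by blast
  have "\<forall>m\<ge>K. \<forall>n\<ge>K. av ((\<Sum>i<m. f i) - (\<Sum>i<n. f i)) < e"
  proof (intro allI impI)
    fix m n assume mn: "m \<ge> K" "n \<ge> K"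
    have *: "(\<Sum>i<m. f i) - (\<Sum>i<n. f i) = (\<Sum>i<m. f i) - (\<Sum>i<K. f i) - ((\<Sum>i<n. f i) - (\<Sum>i<K. f i))"
      by simp
    have "\<And>m. m \<ge> K \<Longrightarrow> (\<Sum>i<m. f i) - (\<Sum>i<K. f i) = (\<Sum>i\<in>{K..<m}. f i)"
      by (metis (no_types) add_diff_cancel_left' atLeast0LessThan le0 sum.atLeastLessThan_concat)
    hence "\<And>m. m \<ge> K \<Longrightarrow> av ((\<Sum>i<m. f i) - (\<Sum>i<K. f i)) < e"
      using K \<open>e>0\<close> by (auto intro!: av_sum_lt)
    thus "av ((\<Sum>i<m. f i) - (\<Sum>i<n. f i)) < e"
      unfolding * using mn by (intro av_diff_le[THEN order.strict_trans1]) auto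
  qed
  thus "\<exists>N. \<forall>m\<ge>N. \<forall>n\<ge>N. av ((\<Sum>i<m. f i) - (\<Sum>i<n. f i)) < e" by blast
qed

lemma sums_bound:
  assumes "av_sums av f L" "\<And>n. av (f n) \<le> B"
  shows "av L \<le> B"
proof -
  have B: "B \<ge> 0" using assms(2)[of 0] nonneg[of "f 0"] by linarith
  have "av (L - 0) \<le> B"
    using assms(1) unfolding av_sums_def
    by (rule conv_limit_bound[where N=0]) (simp add: av_sum_le assms(2) B)
  thus ?thesis by simp
qed

lemma sums_diff: "av_sums av f A \<Longrightarrow> av_sums av g B \<Longrightarrow> av_sums av (\<lambda>n. f n - g n) (A - B)"
  unfolding av_sums_def by (drule (1) conv_diff) (simp add: sum_subtractf)

lemma sums_const_mult: "av_sums av f A \<Longrightarrow> av_sums av (\<lambda>n. c * f n) (c * A)"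
  unfolding av_sums_def by (drule conv_const_mult[where c=c]) (simp add: sum_distrib_left)

lemma sums_sum: "finite S \<Longrightarrow> (\<And>i. i \<in> S \<Longrightarrow> av_sums av (f i) (L i)) \<Longrightarrow>
   av_sums av (\<lambda>n. \<Sum>i\<in>S. f i n) (\<Sum>i\<in>S. L i)"
  unfolding av_sums_def by (drule conv_sum[where f="\<lambda>i n. \<Sum>k<n. f i k"]) (auto simp: sum.swap[of _ S])

lemma sums_geometric:
  assumes "av w < 1"
  shows "av_sums av (\<lambda>n. w ^ n) (inverse (1 - w))"
proof -
  have w1: "w \<noteq> 1" using assms by auto
  have a1: "av (1 - w) = 1" using av_add_eq'[of "-w" 1] assms by simp
  show ?thesis unfolding av_sums_def av_conv_def
  proof (intro allI impI)
    fix e :: real assume "e > 0"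
    obtain K where K: "av w ^ K < e"
      using real_arch_pow_inv[OF \<open>e>0\<close> assms] by blast
    have "\<forall>n\<ge>K. av ((\<Sum>i<n. w ^ i) - inverse (1 - w)) < e"
    proof (intro allI impI)
      fix n assume "n \<ge> K"
      have "(\<Sum>i<n. w ^ i) * (1 - w) = 1 - w ^ n"
      proof (induction n)
        case (Suc n)
        have "(\<Sum>i<Suc n. w ^ i) * (1 - w) = (\<Sum>i<n. w ^ i) * (1 - w) + w ^ n * (1 - w)"
          by (simp add: distrib_right)
        also have "\<dots> = 1 - w ^ Suc n" unfolding Suc.IH by (simp add: algebra_simps)
        finally show ?case .
      qed simp
      hence "(\<Sum>i<n. w ^ i) = (1 - w ^ n) / (1 - w)"
        using w1 by (simp add: eq_divide_eq)
      hence "(\<Sum>i<n. w ^ i) - inverse (1 - w) = (1 - w ^ n) / (1 - w) - 1 / (1 - w)"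
        by (simp add: inverse_eq_divide)
      also have "\<dots> = - (w ^ n / (1 - w))" by (simp add: diff_divide_distrib)
      finally have "(\<Sum>i<n. w ^ i) - inverse (1 - w) = - (w ^ n / (1 - w))" .
      hence "av ((\<Sum>i<n. w ^ i) - inverse (1 - w)) = av w ^ n" using a1 by simp
      also have "\<dots> \<le> av w ^ K" using \<open>n \<ge> K\<close> assms nonneg[of w] by (simp add: power_decreasing)
      finally show "av ((\<Sum>i<n. w ^ i) - inverse (1 - w)) < e" using K by simp
    qed
    thus "\<exists>N. \<forall>n\<ge>N. av ((\<Sum>i<n. w ^ i) - inverse (1 - w)) < e" by blast
  qed
qed

lemma interchange:
  assumes rows: "\<And>N. N \<ge> Nz \<Longrightarrow> av_sums av (F N) (S N)"
    and unif: "\<And>N n. N \<ge> Nz \<Longrightarrow> av (F N n - G n) \<le> B N"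
    and B0: "\<And>e. e > 0 \<Longrightarrow> \<exists>N. \<forall>n\<ge>N. B n < e"
    and G0: "\<And>e. e > 0 \<Longrightarrow> \<exists>K. \<forall>n\<ge>K. av (G n) < e"
  shows "\<exists>L. av_sums av G L \<and> av_conv av S L"
proof -
  obtain L where L: "av_sums av G L" using sums_exists[OF G0] by blast
  have "av_conv av S L" unfolding av_conv_def
  proof (intro allI impI)
    fix e :: real assume "e > 0"
    then obtain N1 where N1: "\<forall>n\<ge>N1. B n < e" using B0 by blast
    have "\<forall>N\<ge>max Nz N1. av (S N - L) < e"
    proof (intro allI impI)
      fix N assume "N \<ge> max Nz N1"
      have "av_sums av (\<lambda>n. F N n - G n) (S N - L)" using sums_diff[OF rows L] \<open>N \<ge> max Nz N1\<close> by simp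
      hence "av (S N - L) \<le> B N" by (rule sums_bound) (use unif \<open>N \<ge> max Nz N1\<close> in auto)
      thus "av (S N - L) < e" using N1 \<open>N \<ge> max Nz N1\<close> by fastforce
    qed
    thus "\<exists>N. \<forall>n\<ge>N. av (S n - L) < e" by blast
  qed
  with L show ?thesis by blast
qed

end


definition VV :: "nat \<Rightarrow> 'k::zero poly set" where "VV M = {b. degree b < M}"
definition Mon :: "nat \<Rightarrow> 'k::{zero,one} poly set" where "Mon N = {a. lead_coeff a = 1 \<and> degree a < N}"

lemma polyK_pCons: "polyK (pCons c p) = fls_const c + fls_X_inv * polyK p"
  unfolding polyK_def by (simp add: map_poly_pCons)

lemma polyK_nth: "polyK a $$ n = (if n \<le> 0 then coeff a (nat (-n)) else 0)"
proof (induction a arbitrary: n rule: pCons_induct)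
  case 0
  then show ?case by (simp add: polyK_def)
next
  case (pCons c p)
  have "polyK (pCons c p) $$ n = (if n = 0 then c else 0) + polyK p $$ (n + 1)"
    by (simp add: polyK_pCons fls_X_inv_times_conv_shift)
  also have "\<dots> = (if n \<le> 0 then coeff (pCons c p) (nat (-n)) else 0)"
  proof -
    consider "n = 0" | "n < 0" | "n > 0" by linarith
    then show ?thesis
    proof cases
      case 1 then show ?thesis using pCons.IH[of 1] by simp
    next
      case 2
      hence "nat (-n) = Suc (nat (-(n+1)))" by simp
      then show ?thesis using 2 pCons.IH[of "n+1"] by (simp add: coeff_pCons)
    next
      case 3 then show ?thesis using pCons.IH[of "n+1"] by simp
    qed
  qed
  finally show ?case .
qed

lemma polyK_add: "polyK (a + b) = polyK a + polyK b"
  by (rule fls_eqI) (simp add: polyK_nth)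

lemma polyK_minus: "polyK (- a) = - polyK a"
  by (rule fls_eqI) (simp add: polyK_nth)

lemma polyK_0[simp]: "polyK 0 = 0"
  by (rule fls_eqI) (simp add: polyK_nth)

lemma polyK_1[simp]: "polyK 1 = 1"
  by (rule fls_eqI) (simp add: polyK_nth)

lemma polyK_eq_0_iff[simp]: "polyK a = 0 \<longleftrightarrow> a = 0"
proof
  assume "polyK a = 0"
  have "\<forall>i. coeff a i = 0"
  proof
    fix i
    have "polyK a $$ (- int i) = coeff a i" by (simp add: polyK_nth)
    thus "coeff a i = 0" using \<open>polyK a = 0\<close> by simp
  qed
  thus "a = 0" by (simp add: poly_eq_iff)
qed simp

lemma polyK_subdegree: "a \<noteq> 0 \<Longrightarrow> fls_subdegree (polyK a) = - int (degree a)"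
proof (rule antisym)
  assume "a \<noteq> 0"
  show "fls_subdegree (polyK a) \<le> - int (degree a)"
    by (rule fls_subdegree_leI) (use \<open>a \<noteq> 0\<close> in \<open>simp add: polyK_nth\<close>)
  show "- int (degree a) \<le> fls_subdegree (polyK a)"
  proof (rule fls_subdegree_geI)
    show "polyK a \<noteq> 0" using \<open>a \<noteq> 0\<close> by simp
    fix k assume "k < - int (degree a)"
    hence "nat (-k) > degree a" by simp
    thus "polyK a $$ k = 0" using \<open>k < _\<close> by (simp add: polyK_nth coeff_eq_0)
  qed
qed

lemma polyK_inj: "polyK a = polyK b \<Longrightarrow> a = b"
  using polyK_add[of a "-b"] polyK_minus[of b] polyK_eq_0_iff[of "a - b"] by simp

lemma finite_VV: "finite (VV M :: 'k::{finite,zero} poly set)"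
proof -
  let ?f = "\<lambda>b::'k poly. map (coeff b) [0..<M]"
  have "inj_on ?f (VV M)"
  proof (rule inj_onI)
    fix a b assume ab: "a \<in> VV M" "b \<in> VV M" "?f a = ?f b"
    have "coeff a i = coeff b i" for i
    proof (cases "i < M")
      case True
      have "\<forall>x\<in>{0..<M}. coeff a x = coeff b x" using ab(3) by simp
      then show ?thesis using True by simp
    next
      case False
      then show ?thesis using ab(1,2) by (simp add: VV_def coeff_eq_0)
    qed
    thus "a = b" by (simp add: poly_eq_iff)
  qed
  moreover have "?f ` VV M \<subseteq> {xs. set xs \<subseteq> UNIV \<and> length xs = M}" by auto
  moreover have "finite {xs :: 'k list. set xs \<subseteq> UNIV \<and> length xs = M}"
    by (rule finite_lists_length_eq) simp
  ultimately show ?thesis by (meson finite_imageD finite_subset)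
qed

lemma finite_Mon: "finite (Mon N :: 'k::{finite,zero,one} poly set)"
  by (rule finite_subset[OF _ finite_VV[of N]]) (auto simp: Mon_def VV_def)

lemma VV_mono: "M \<le> M' \<Longrightarrow> VV M \<subseteq> VV M'" by (auto simp: VV_def)
lemma Mon_mono: "N \<le> N' \<Longrightarrow> Mon N \<subseteq> Mon N'" by (auto simp: Mon_def)

locale Cset = vfield av for av :: "'c::field \<Rightarrow> real" +
  fixes \<iota> :: "'k::{finite,field} fls \<Rightarrow> 'c"
  assumes i_add: "\<iota> (f + g) = \<iota> f + \<iota> g" and i_mult: "\<iota> (f * g) = \<iota> f * \<iota> g"
    and i_1: "\<iota> 1 = 1"
    and i_av: "f \<noteq> 0 \<Longrightarrow> av (\<iota> f) = real (CARD('k)) powr (- real_of_int (fls_subdegree f))"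
begin


lemma qq_ge2: "real CARD('k) \<ge> 2"
proof -
  have "card {0::'k, 1} \<le> CARD('k)" by (rule card_mono) auto
  hence "CARD('k) \<ge> 2" by simp
  thus ?thesis by simp
qed

lemma qq_pos: "real CARD('k) > 0" using qq_ge2 by simp

lemma i_0[simp]: "\<iota> 0 = 0"
proof -
  have "\<iota> 0 = \<iota> 0 + \<iota> 0" using i_add[of 0 0] by simp
  thus ?thesis by (simp only: add_cancel_right_right)
qed

lemma i_minus: "\<iota> (- f) = - \<iota> f"
proof -
  have "\<iota> f + \<iota> (- f) = 0" using i_add[of f "-f"] by simp
  thus ?thesis using minus_unique[of "\<iota> f" "\<iota> (- f)"] by simp
qed

lemma i_diff: "\<iota> (f - g) = \<iota> f - \<iota> g"
  using i_add[of f "-g"] i_minus[of g] by simp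

lemma i_av_pos: "f \<noteq> 0 \<Longrightarrow> av (\<iota> f) > 0"
  using i_av qq_pos by simp

lemma i_eq_0_iff[simp]: "\<iota> f = 0 \<longleftrightarrow> f = 0"
  using i_av_pos[of f] by (cases "f = 0") auto

lemma i_inj: "\<iota> f = \<iota> g \<Longrightarrow> f = g"
  using i_diff[of f g] i_eq_0_iff[of "f - g"] by simp

lemma i_inverse: "\<iota> (inverse f) = inverse (\<iota> f)"
proof (cases "f = 0")
  case False
  have "\<iota> f * \<iota> (inverse f) = 1" using i_mult[of f "inverse f"] False i_1 by simp
  then show ?thesis by (metis inverse_unique)
qed simp

lemma i_divide: "\<iota> (f / g) = \<iota> f / \<iota> g"
  by (simp add: divide_inverse i_mult i_inverse)

lemma i_of_nat: "\<iota> (of_nat n) = of_nat n"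
  by (induction n) (simp_all add: i_add i_1)

lemma CHAR_c: "CHAR('c) = CHAR('k)"
proof (rule CHAR_eqI)
  show "of_nat CHAR('k) = (0::'c)"
  proof -
    have "(of_nat CHAR('k) :: 'k fls) = 0" by (simp add: fls_of_nat)
    thus ?thesis using i_of_nat[of "CHAR('k)"] by simp
  qed
  fix x assume "of_nat x = (0::'c)"
  hence "\<iota> (of_nat x) = \<iota> 0" by (simp add: i_of_nat)
  hence "(of_nat x :: 'k fls) = 0" by (rule i_inj)
  hence "(of_nat x :: 'k) = 0" by (simp add: fls_of_nat)
  thus "CHAR('k) dvd x" by (simp add: of_nat_eq_0_iff_char_dvd)
qed

lemma prime_CHAR_c: "prime CHAR('c)"
  unfolding CHAR_c by (rule prime_CHAR_semidom) (simp add: finite_imp_CHAR_pos)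

abbreviation \<beta> where "\<beta> b \<equiv> \<iota> (polyK b)"

lemma beta_add: "\<beta> (a + b) = \<beta> a + \<beta> b" by (simp add: polyK_add i_add)
lemma beta_minus: "\<beta> (- a) = - \<beta> a" by (simp add: polyK_minus i_minus)
lemma beta_0: "\<beta> 0 = 0" by simp
lemma beta_1: "\<beta> 1 = 1" by (simp add: i_1)
lemma beta_inj: "\<beta> a = \<beta> b \<Longrightarrow> a = b" by (metis i_inj polyK_inj)

lemma av_beta: "b \<noteq> 0 \<Longrightarrow> av (\<beta> b) = real CARD('k) ^ degree b"
  using i_av[of "polyK b"] polyK_subdegree[of b] qq_pos by (simp add: powr_realpow)

lemma av_beta_ge1: "b \<noteq> 0 \<Longrightarrow> av (\<beta> b) \<ge> 1"
  using av_beta qq_ge2 by simp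

end


context Cset
begin

lemma av_i_small:
  assumes "g \<noteq> 0" "av (\<iota> g) < inverse (real CARD('k) ^ k)" "j \<le> int k"
  shows "g $$ j = 0"
proof -
  have "real CARD('k) powr (- real_of_int (fls_subdegree g)) < real CARD('k) powr (- real k)"
    using assms(1,2) i_av qq_pos by (simp add: powr_minus powr_realpow)
  hence "- real_of_int (fls_subdegree g) < - real k"
    using qq_ge2 by (simp add: powr_less_cancel_iff)
  hence "j < fls_subdegree g" using assms(3) by linarith
  thus ?thesis by simp
qed

lemma av_i_bound:
  assumes "\<And>j. j \<le> int n \<Longrightarrow> g $$ j = 0"
  shows "av (\<iota> g) \<le> inverse (real CARD('k) ^ n)"
proof (cases "g = 0")
  case False
  have "fls_subdegree g > int n"
  proof (rule ccontr)
    assume "\<not> fls_subdegree g > int n"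
    hence "g $$ fls_subdegree g = 0" using assms by simp
    thus False using False by simp
  qed
  hence "real CARD('k) powr (- real_of_int (fls_subdegree g)) \<le> real CARD('k) powr (- real n)"
    using qq_ge2 by (intro powr_mono) auto
  thus ?thesis using i_av[OF False] qq_pos by (simp add: powr_minus powr_realpow)
qed (use qq_pos in simp)

lemma inv_pow_small: "e > 0 \<Longrightarrow> \<exists>n. inverse (real CARD('k) ^ n) < e"
proof -
  assume "e > 0"
  have "inverse (real CARD('k)) < 1" using qq_ge2 by (simp add: inverse_less_1_iff)
  then obtain n where "inverse (real CARD('k)) ^ n < e"
    using real_arch_pow_inv[OF \<open>e > 0\<close>] by blast
  thus ?thesis by (auto simp: power_inverse)
qed

lemma dist_pos:
  assumes z: "z \<notin> range \<iota>"
  shows "\<exists>\<delta>>0. \<delta> \<le> 1 \<and> (\<forall>f. av (z - \<iota> f) \<ge> \<delta>)"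
proof (rule ccontr)
  assume na: "\<not> ?thesis"
  have ex: "\<exists>f. av (z - \<iota> f) < d" if "d > 0" for d
  proof -
    have "min d 1 > 0" "min d 1 \<le> 1" using that by auto
    then obtain f where "av (z - \<iota> f) < min d 1" using na by (meson not_less)
    thus ?thesis by auto
  qed
  define F where "F n = (SOME f. av (z - \<iota> f) < inverse (real CARD('k) ^ n))" for n
  have F: "av (z - \<iota> (F n)) < inverse (real CARD('k) ^ n)" for n
    unfolding F_def by (rule someI_ex, rule ex) (use qq_pos in simp)
  have agree: "F m $$ j = F n $$ j" if "m \<ge> k" "n \<ge> k" "j \<le> int k" for m n k j
  proof (cases "F m = F n")
    case False
    have "inverse (real CARD('k) ^ m) \<le> inverse (real CARD('k) ^ k)"
      using that qq_ge2 by (intro le_imp_inverse_le power_increasing) auto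
    hence a1: "av (z - \<iota> (F m)) < inverse (real CARD('k) ^ k)" using F[of m] by linarith
    have "inverse (real CARD('k) ^ n) \<le> inverse (real CARD('k) ^ k)"
      using that qq_ge2 by (intro le_imp_inverse_le power_increasing) auto
    hence a2: "av (z - \<iota> (F n)) < inverse (real CARD('k) ^ k)" using F[of n] by linarith
    have "av ((z - \<iota> (F n)) - (z - \<iota> (F m))) < inverse (real CARD('k) ^ k)"
      using a1 a2 by (intro av_diff_le[THEN order.strict_trans1]) auto
    hence "av (\<iota> (F m - F n)) < inverse (real CARD('k) ^ k)" by (simp add: i_diff)
    hence "(F m - F n) $$ j = 0" using False that(3) by (intro av_i_small) auto
    thus ?thesis by simp
  qed simp
  define h where "h j = F (nat j) $$ j" for j
  define G where "G = Abs_fls h"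
  have hlow: "\<forall>j<min 0 (fls_subdegree (F 0)). h j = 0" unfolding h_def by auto
  have G: "G $$ j = h j" for j unfolding G_def by (rule nth_Abs_fls_lower_bound[OF hlow])
  have "av (z - \<iota> G) \<le> inverse (real CARD('k) ^ n)" for n
  proof -
    have "(G - F n) $$ j = 0" if "j \<le> int n" for j
    proof -
      have "F (nat j) $$ j = F n $$ j" by (rule agree[of "nat j" "nat j" n j]) (use that in auto)
      thus ?thesis by (simp add: G h_def)
    qed
    hence "av (\<iota> (G - F n)) \<le> inverse (real CARD('k) ^ n)" by (rule av_i_bound)
    moreover have e: "z - \<iota> G = (z - \<iota> (F n)) - \<iota> (G - F n)" by (simp add: i_diff)
    moreover have "av (z - \<iota> (F n)) \<le> inverse (real CARD('k) ^ n)" using F[of n] by simp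
    ultimately show ?thesis by (metis av_diff_leB)
  qed
  hence "av (z - \<iota> G) \<le> 0"
    by (metis inv_pow_small not_le order.strict_trans1)
  hence "z - \<iota> G = 0" by (rule av_sum_eq_zero)
  hence "z = \<iota> G" by simp
  thus False using z by simp
qed

lemma reduce:
  "\<exists>b0. \<forall>b. av (x + \<beta> b0) \<le> av (x + \<beta> b)"
proof -
  obtain K where K: "av x < real CARD('k) ^ K"
    using real_arch_pow[of "real CARD('k)" "av x"] qq_ge2 by auto
  let ?S = "VV (Suc K) :: 'k poly set"
  let ?g = "\<lambda>b. av (x + \<beta> b)"
  have fin: "finite (?g ` ?S)" by (intro finite_imageI finite_VV)
  have ne: "0 \<in> ?S" by (simp add: VV_def)
  define m where "m = Min (?g ` ?S)"
  have "m \<in> ?g ` ?S" unfolding m_def using fin ne by (intro Min_in) auto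
  then obtain b0 where b0: "b0 \<in> ?S" "?g b0 = m" by auto
  have "m \<le> ?g b" for b
  proof (cases "b \<in> ?S")
    case True then show ?thesis unfolding m_def using fin by simp
  next
    case False
    hence "degree b \<ge> Suc K" by (simp add: VV_def)
    hence bnz: "b \<noteq> 0" by auto
    have "real CARD('k) ^ K \<le> real CARD('k) ^ degree b"
      using qq_ge2 \<open>degree b \<ge> Suc K\<close> by (intro power_increasing) auto
    hence "av x < av (\<beta> b)" using K av_beta[OF bnz] by simp
    hence "?g b = av (\<beta> b)" by (rule av_add_eq)
    moreover have "m \<le> ?g 0" unfolding m_def using fin ne by (intro Min_le) blast+
    ultimately show ?thesis using \<open>av x < av (\<beta> b)\<close> by simp
  qed
  thus ?thesis using b0 by metis
qed

lemma dist_scaled: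
  assumes "\<forall>f. av (z - \<iota> f) \<ge> \<delta>" "a \<noteq> 0"
  shows "av (\<beta> a * z + \<beta> b) \<ge> av (\<beta> a) * \<delta>"
proof -
  have nz: "\<beta> a \<noteq> 0" using assms(2) by simp
  have "\<beta> a * z + \<beta> b = \<beta> a * (z - \<iota> (- (polyK b) / polyK a))"
    using nz by (simp add: i_divide i_minus field_simps)
  hence "av (\<beta> a * z + \<beta> b) = av (\<beta> a) * av (z - \<iota> (- (polyK b) / polyK a))" by simp
  thus ?thesis using assms(1) nonneg[of "\<beta> a"] by (simp add: mult_left_mono)
qed

end


definition PV :: "'c::field set \<Rightarrow> 'c poly" where "PV V = (\<Prod>v\<in>V. [:v, 1:])"

definition geo :: "'c::field \<Rightarrow> 'c fps" where "geo c = Abs_fps (\<lambda>n. (-1) ^ n / c ^ Suc n)"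

lemma roots_card_zero:
  fixes p :: "'c::field poly"
  assumes "finite S" "\<And>x. x \<in> S \<Longrightarrow> poly p x = 0" "degree p < card S"
  shows "p = 0"
proof (rule ccontr)
  assume "p \<noteq> 0"
  have "card S \<le> card {x. poly p x = 0}"
    using assms(2) poly_roots_finite[OF \<open>p \<noteq> 0\<close>] by (intro card_mono) auto
  also have "\<dots> \<le> degree p" by (rule card_poly_roots_bound[OF \<open>p \<noteq> 0\<close>])
  finally show False using assms(3) by simp
qed

lemma geo_nth: "geo c $ n = (-1) ^ n / c ^ Suc n"
  by (simp add: geo_def)

lemma geo_mult: "c \<noteq> 0 \<Longrightarrow> geo c * (fps_const c + fps_X) = 1"
proof (rule fps_ext)
  fix n assume c: "c \<noteq> 0"
  show "(geo c * (fps_const c + fps_X)) $ n = 1 $ n"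
  proof (cases n)
    case 0 then show ?thesis using c by (simp add: distrib_left geo_nth)
  next
    case (Suc m)
    have "(geo c * (fps_const c + fps_X)) $ n = (-1) ^ Suc m / c ^ Suc (Suc m) * c + (-1) ^ m / c ^ Suc m"
      by (simp add: distrib_left geo_nth Suc)
    also have "\<dots> = 0" using c by (simp add: field_simps)
    finally show ?thesis using Suc by simp
  qed
qed

lemma fps_of_poly_lin: "fps_of_poly [:c::'c::field, 1:] = fps_const c + fps_X"
  by (simp add: fps_of_poly_pCons)

lemma pcompose_lin: "pcompose [:v::'c::field, 1:] [:x, 1:] = [:v + x, 1:]"
  by (simp add: pcompose_pCons)

lemma pderiv_lin: "pderiv [:c::'c::field, 1:] = 1"
  by (simp add: pderiv_pCons)

lemma pderiv_const: "pderiv [:c::'c::field:] = 0"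
  by (simp add: pderiv_pCons)

locale addgrp =
  fixes V :: "'c::field set"
  assumes finV: "finite V" and zV: "0 \<in> V" and addV: "v \<in> V \<Longrightarrow> w \<in> V \<Longrightarrow> v + w \<in> V"
    and negV: "v \<in> V \<Longrightarrow> - v \<in> V"
begin

lemma poly_PV: "poly (PV V) y = (\<Prod>w\<in>V. w + y)"
  by (simp add: PV_def poly_prod)

lemma bij_shift: "v \<in> V \<Longrightarrow> bij_betw (\<lambda>w. w + v) V V"
  unfolding bij_betw_def
proof
  assume v: "v \<in> V"
  show "inj_on (\<lambda>w. w + v) V" by (auto intro: inj_onI)
  show "(\<lambda>w. w + v) ` V = V"
  proof
    show "(\<lambda>w. w + v) ` V \<subseteq> V" using v addV by auto
    show "V \<subseteq> (\<lambda>w. w + v) ` V"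
    proof
      fix u assume "u \<in> V"
      hence "u + - v \<in> V" using v negV addV by blast
      moreover have "u = (u + - v) + v" by simp
      ultimately show "u \<in> (\<lambda>w. w + v) ` V" by blast
    qed
  qed
qed

lemma PV_shift: "v \<in> V \<Longrightarrow> poly (PV V) (y + v) = poly (PV V) y"
proof -
  assume v: "v \<in> V"
  have "poly (PV V) (y + v) = (\<Prod>w\<in>V. (w + v) + y)" by (simp add: poly_PV add_ac)
  also have "\<dots> = (\<Prod>w\<in>V. w + y)"
    using prod.reindex_bij_betw[OF bij_shift[OF v], of "\<lambda>u. u + y"] by simp
  finally show ?thesis by (simp add: poly_PV)
qed

lemma PV_root: "v \<in> V \<Longrightarrow> poly (PV V) v = 0"
proof -
  assume v: "v \<in> V"
  hence "- v \<in> V" by (rule negV)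
  thus ?thesis unfolding poly_PV using finV by (intro prod_zero) (auto intro!: bexI[of _ "-v"])
qed

lemma card_V: "card V \<ge> 1"
  using finV zV by (metis One_nat_def Suc_leI card_gt_0_iff empty_iff)

lemma degree_PV: "degree (PV V) = card V"
  unfolding PV_def by (subst degree_prod_eq_sum_degree) auto

lemma lead_PV: "lead_coeff (PV V) = 1"
  unfolding PV_def by (simp add: lead_coeff_prod)

lemma PV_add: "pcompose (PV V) [:y, 1:] = PV V + [:poly (PV V) y:]"
proof -
  let ?P = "PV V"
  define R where "R = pcompose ?P [:y, 1:] - ?P - [:poly ?P y:]"
  have dc: "degree (pcompose ?P [:y, 1:]) = card V" by (simp add: degree_pcompose degree_PV)
  have lc: "coeff (pcompose ?P [:y, 1:]) (card V) = 1"
    using lead_coeff_comp[of "[:y,1:]" ?P] dc degree_PV lead_PV by simp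
  have c0: "coeff [:poly ?P y:] (card V) = 0" using card_V
    by (metis One_nat_def Suc_le_D coeff_pCons_Suc coeff_pCons_0 pCons_0_0 coeff_0)
  have cR: "coeff R (card V) = 0" unfolding R_def using lc lead_PV degree_PV c0 by simp
  have dR: "degree R \<le> card V" unfolding R_def
    by (intro degree_diff_le) (auto simp: dc degree_PV)
  have "R = 0"
  proof (rule roots_card_zero[OF finV])
    fix v assume v: "v \<in> V"
    have "poly (pcompose ?P [:y, 1:]) v = poly ?P (y + v)" by (simp add: poly_pcompose)
    also have "\<dots> = poly ?P y" using PV_shift[OF v] .
    finally show "poly R v = 0" unfolding R_def using PV_root[OF v] by simp
  next
    show "degree R < card V"
    proof (rule ccontr)
      assume "\<not> degree R < card V"
      hence dd: "degree R = card V" using dR by simp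
      hence "lead_coeff R = 0" using cR by simp
      hence "R = 0" by (simp only: leading_coeff_0_iff)
      hence "degree R = 0" by simp
      thus False using dd card_V by simp
    qed
  qed
  thus ?thesis unfolding R_def by (simp only: diff_diff_eq right_minus_eq)
qed

lemma degree_pderiv_le: "degree (pderiv (p :: 'c poly)) \<le> degree p - 1"
proof (rule degree_le, intro allI impI)
  fix i assume "degree p - 1 < i"
  hence "degree p < Suc i" by simp
  thus "coeff (pderiv p) i = 0" by (simp add: coeff_pderiv coeff_eq_0)
qed

lemma pderiv_PV_shift: "pcompose (pderiv (PV V)) [:y, 1:] = pderiv (PV V)"
proof -
  have "pderiv (pcompose (PV V) [:y, 1:]) = pcompose (pderiv (PV V)) [:y, 1:]"
    by (simp add: pderiv_pcompose pderiv_lin)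
  moreover have "pderiv (pcompose (PV V) [:y, 1:]) = pderiv (PV V)"
    by (simp add: PV_add pderiv_add pderiv_const)
  ultimately show ?thesis by simp
qed

lemma pderiv_PV_val: "poly (pderiv (PV V)) y = poly (pderiv (PV V)) 0"
proof -
  have "poly (pderiv (PV V)) y = poly (pcompose (pderiv (PV V)) [:y, 1:]) 0"
    by (simp add: poly_pcompose)
  thus ?thesis by (simp add: pderiv_PV_shift)
qed

lemma pderiv_PV_const: "pderiv (PV V) = [:poly (pderiv (PV V)) 0:]"
proof -
  let ?Q = "pderiv (PV V) - [:poly (pderiv (PV V)) 0:]"
  have "?Q = 0"
  proof (rule roots_card_zero[OF finV])
    fix v assume "v \<in> V"
    show "poly ?Q v = 0" using pderiv_PV_val[of v] by simp
  next
    have "degree (pderiv (PV V)) < card V" using card_V degree_pderiv_le[of "PV V"] degree_PV by simp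
    hence "degree (pderiv (PV V)) \<le> card V - 1" by simp
    hence "degree ?Q \<le> card V - 1" by (intro degree_diff_le) auto
    thus "degree ?Q < card V" using card_V by simp
  qed
  thus ?thesis by simp
qed

lemma gamma_PV: "poly (pderiv (PV V)) 0 = (\<Prod>v\<in>V - {0}. v)"
proof -
  have "pderiv (PV V) = (\<Sum>a\<in>V. (\<Prod>v\<in>V - {a}. [:v, 1:]))"
    unfolding PV_def by (simp add: pderiv_prod pderiv_lin)
  hence "poly (pderiv (PV V)) 0 = (\<Sum>a\<in>V. (\<Prod>v\<in>V - {a}. v))"
    by (simp add: poly_sum poly_prod)
  also have "\<dots> = (\<Prod>v\<in>V - {0}. v) + (\<Sum>a\<in>V - {0}. (\<Prod>v\<in>V - {a}. v))"
    using sum.remove[OF finV zV] by simp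
  also have "(\<Sum>a\<in>V - {0}. (\<Prod>v\<in>V - {a}. v)) = 0"
    using finV zV by (intro sum.neutral ballI prod_zero) auto
  finally show ?thesis by simp
qed

lemma fps_identity:
  assumes nz: "\<And>v. v \<in> V \<Longrightarrow> x + v \<noteq> 0"
  shows "(\<Sum>v\<in>V. geo (x + v)) * (fps_const (poly (PV V) x) + fps_of_poly (PV V))
         = fps_const (poly (pderiv (PV V)) 0)"
proof -
  let ?L = "\<lambda>v. fps_const (v + x) + fps_X"
  have comp: "pcompose (PV V) [:x, 1:] = (\<Prod>v\<in>V. [:v + x, 1:])"
    unfolding PV_def by (simp add: pcompose_prod pcompose_lin)
  have D: "fps_const (poly (PV V) x) + fps_of_poly (PV V) = (\<Prod>v\<in>V. ?L v)"
  proof -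
    have "fps_const (poly (PV V) x) + fps_of_poly (PV V) = fps_of_poly (pcompose (PV V) [:x, 1:])"
      by (simp add: PV_add fps_of_poly_add fps_of_poly_const)
    also have "\<dots> = (\<Prod>v\<in>V. ?L v)" by (simp add: comp fps_of_poly_prod fps_of_poly_lin)
    finally show ?thesis .
  qed
  have "(\<Sum>v\<in>V. geo (x + v)) * (\<Prod>v\<in>V. ?L v) = (\<Sum>v\<in>V. geo (x + v) * (\<Prod>w\<in>V. ?L w))"
    by (simp add: sum_distrib_right)
  also have "\<dots> = (\<Sum>v\<in>V. (\<Prod>w\<in>V - {v}. ?L w))"
  proof (rule sum.cong[OF refl])
    fix v assume v: "v \<in> V"
    have "geo (x + v) * (\<Prod>w\<in>V. ?L w) = (geo (x + v) * ?L v) * (\<Prod>w\<in>V - {v}. ?L w)"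
      using prod.remove[OF finV v, of ?L] by (simp add: mult.assoc)
    also have "geo (x + v) * ?L v = 1" using geo_mult[OF nz[OF v]] by (simp add: add.commute)
    finally show "geo (x + v) * (\<Prod>w\<in>V. ?L w) = (\<Prod>w\<in>V - {v}. ?L w)" by simp
  qed
  also have "\<dots> = fps_of_poly (pderiv (pcompose (PV V) [:x, 1:]))"
    by (simp add: comp pderiv_prod pderiv_lin fps_of_poly_sum fps_of_poly_prod fps_of_poly_lin)
  also have "pderiv (pcompose (PV V) [:x, 1:]) = pderiv (PV V)"
    by (simp add: PV_add pderiv_add pderiv_const)
  also have "fps_of_poly (pderiv (PV V)) = fps_const (poly (pderiv (PV V)) 0)"
    by (subst pderiv_PV_const) (simp add: fps_of_poly_const)
  finally show ?thesis using D by simp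
qed

lemma coeff_identity:
  assumes nz: "\<And>v. v \<in> V \<Longrightarrow> x + v \<noteq> 0"
  shows "(\<Sum>v\<in>V. (-1) ^ n / (x + v) ^ Suc n)
         = poly (pderiv (PV V)) 0 * inverse (fps_const (poly (PV V) x) + fps_of_poly (PV V)) $ n"
proof -
  let ?D = "fps_const (poly (PV V) x) + fps_of_poly (PV V)"
  have "poly (PV V) x \<noteq> 0" unfolding poly_PV using finV nz by (simp add: add.commute)
  moreover have "coeff (PV V) 0 = 0" using PV_root[OF zV] by (simp add: poly_0_coeff_0)
  ultimately have D0: "?D $ 0 \<noteq> 0" by simp
  have "(\<Sum>v\<in>V. geo (x + v)) = (\<Sum>v\<in>V. geo (x + v)) * (?D * inverse ?D)"
    using inverse_mult_eq_1'[OF D0] by simp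
  also have "\<dots> = fps_const (poly (pderiv (PV V)) 0) * inverse ?D"
    by (simp only: mult.assoc[symmetric] fps_identity[OF nz])
  finally have "(\<Sum>v\<in>V. geo (x + v)) $ n = (fps_const (poly (pderiv (PV V)) 0) * inverse ?D) $ n"
    by simp
  thus ?thesis by (simp add: fps_sum_nth geo_nth)
qed

end

context vfield
begin

lemma av_prod: "av (prod f S) = (\<Prod>x\<in>S. av (f x))"
  by (induction S rule: infinite_finite_induct) auto

lemma av_add_le_scaled: "av x * s \<le> B \<Longrightarrow> av y * s \<le> B \<Longrightarrow> s \<ge> 0 \<Longrightarrow> av (x + y) * s \<le> B"
proof -
  assume a: "av x * s \<le> B" "av y * s \<le> B" "s \<ge> 0"
  have "av (x + y) * s \<le> max (av x) (av y) * s" using ultra a(3) by (rule mult_right_mono)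
  also have "\<dots> = max (av x * s) (av y * s)" using a(3) by (simp add: max_mult_distrib_right)
  finally show ?thesis using a by simp
qed

lemma inv_bound:
  assumes u: "u \<noteq> 0" and R0: "R $ 0 = 0" and Rb: "\<And>k. av (R $ k) * \<sigma> ^ k \<le> av u" and s: "\<sigma> > 0"
  shows "av (inverse (fps_const u + R) $ n) * \<sigma> ^ n \<le> inverse (av u)"
proof (induction n rule: less_induct)
  case (less n)
  let ?D = "fps_const u + R"
  let ?W = "inverse ?D"
  have D0: "?D $ 0 = u" using R0 by simp
  have WD: "?W * ?D = 1" by (rule inverse_mult_eq_1) (use D0 u in simp)
  show ?case
  proof (cases n)
    case 0 then show ?thesis using D0 by simp
  next
    case (Suc m)
    have "0 = (?W * ?D) $ n" using WD Suc by simp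
    also have "\<dots> = (\<Sum>i=0..n. ?W $ i * ?D $ (n - i))" by (rule fps_mult_nth)
    also have "\<dots> = ?W $ n * u + (\<Sum>i<n. ?W $ i * R $ (n - i))"
    proof -
      have "(\<Sum>i=0..n. ?W $ i * ?D $ (n - i)) = (\<Sum>i<Suc n. ?W $ i * ?D $ (n - i))"
        by (simp add: atLeast0AtMost lessThan_Suc_atMost)
      also have "\<dots> = (\<Sum>i<n. ?W $ i * ?D $ (n - i)) + ?W $ n * ?D $ 0" by simp
      also have "(\<Sum>i<n. ?W $ i * ?D $ (n - i)) = (\<Sum>i<n. ?W $ i * R $ (n - i))"
        by (intro sum.cong) auto
      finally show ?thesis using D0 by simp
    qed
    finally have eq: "?W $ n * u = - (\<Sum>i<n. ?W $ i * R $ (n - i))" by (simp add: eq_neg_iff_add_eq_0)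
    have "av (\<Sum>i<n. ?W $ i * R $ (n - i)) \<le> inverse (\<sigma> ^ n)"
    proof (rule av_sum_le)
      fix i assume "i \<in> {..<n}"
      hence i: "i < n" by simp
      have "av (?W $ i) * \<sigma> ^ i \<le> inverse (av u)" by (rule less.IH[OF i])
      moreover have "av (R $ (n - i)) * \<sigma> ^ (n - i) \<le> av u" by (rule Rb)
      ultimately have "(av (?W $ i) * \<sigma> ^ i) * (av (R $ (n - i)) * \<sigma> ^ (n - i)) \<le> inverse (av u) * av u"
        by (intro mult_mono) (auto simp: s nonneg less_imp_le)
      also have "\<dots> = 1" using av_pos[OF u] by simp
      also have "(av (?W $ i) * \<sigma> ^ i) * (av (R $ (n - i)) * \<sigma> ^ (n - i)) = av (?W $ i * R $ (n - i)) * \<sigma> ^ n"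
        using i by (simp add: power_add[symmetric])
      finally show "av (?W $ i * R $ (n - i)) \<le> inverse (\<sigma> ^ n)"
        using s by (simp add: field_simps)
    qed (use s in simp)
    hence "av (?W $ n) * av u \<le> inverse (\<sigma> ^ n)" using eq by (metis av_minus mult)
    hence "av (?W $ n) * av u * \<sigma> ^ n \<le> 1" using s by (simp add: field_simps)
    thus ?thesis using av_pos[OF u] by (simp add: field_simps)
  qed
qed

lemma gauss_prod:
  assumes "finite S" "\<sigma> \<ge> 0"
  shows "av (coeff (\<Prod>v\<in>S. [:v, 1:]) k) * \<sigma> ^ k \<le> (\<Prod>v\<in>S. max \<sigma> (av v))"
  using assms(1)
proof (induction S arbitrary: k rule: finite_induct)
  case empty
  then show ?case by (cases k) auto
next
  case (insert a S)
  let ?Q = "\<Prod>v\<in>S. [:v, 1:]"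
  let ?G = "\<Prod>v\<in>S. max \<sigma> (av v)"
  let ?m = "max \<sigma> (av a)"
  have G0: "?G \<ge> 0" using assms(2) by (intro prod_nonneg) (auto simp: max_def nonneg)
  have "(\<Prod>v\<in>insert a S. [:v, 1:]) = smult a ?Q + pCons 0 ?Q" using insert by simp
  hence c: "coeff (\<Prod>v\<in>insert a S. [:v, 1:]) k = a * coeff ?Q k + coeff (pCons 0 ?Q) k" by simp
  have b1: "av (a * coeff ?Q k) * \<sigma> ^ k \<le> ?m * ?G"
  proof -
    have "av (a * coeff ?Q k) * \<sigma> ^ k = av a * (av (coeff ?Q k) * \<sigma> ^ k)" by simp
    also have "\<dots> \<le> ?m * ?G" using insert.IH[of k] G0 assms(2) nonneg[of a] nonneg[of "coeff ?Q k"]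
      by (intro mult_mono) (auto simp: max_def)
    finally show ?thesis .
  qed
  have b2: "av (coeff (pCons 0 ?Q) k) * \<sigma> ^ k \<le> ?m * ?G"
  proof (cases k)
    case 0 then show ?thesis using G0 assms(2) by (simp add: max_def)
  next
    case (Suc j)
    have "av (coeff (pCons 0 ?Q) k) * \<sigma> ^ k = \<sigma> * (av (coeff ?Q j) * \<sigma> ^ j)" using Suc by simp
    also have "\<dots> \<le> ?m * ?G" using insert.IH[of j] G0 assms(2) nonneg[of "coeff ?Q j"]
      by (intro mult_mono) (auto simp: max_def)
    finally show ?thesis .
  qed
  have "av (coeff (\<Prod>v\<in>insert a S. [:v, 1:]) k) * \<sigma> ^ k \<le> ?m * ?G"
    unfolding c using b1 b2 assms(2) by (intro av_add_le_scaled) auto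
  thus ?case using insert by simp
qed

lemma main_est:
  assumes V: "addgrp V" and one: "1 \<in> V" and xmin: "\<And>v. v \<in> V \<Longrightarrow> av x \<le> av (x + v)"
    and s: "0 < \<sigma>" "\<sigma> \<le> av x"
  shows "av (\<Sum>v\<in>V. inverse ((x + v) ^ Suc n)) * \<sigma> ^ n \<le> inverse (av x ^ 2)"
proof -
  interpret addgrp V by (rule V)
  have xpos: "av x > 0" using s by simp
  have nz: "x + v \<noteq> 0" if "v \<in> V" for v using xmin[OF that] xpos by auto
  have vle: "av v \<le> av (x + v)" if "v \<in> V" for v
  proof (cases "av x < av v")
    case True then show ?thesis using av_add_eq by simp
  next
    case False then show ?thesis using xmin[OF that] by simp
  qed
  let ?P = "PV V"
  let ?u = "poly ?P x"
  let ?\<gamma> = "poly (pderiv ?P) 0"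
  let ?W = "inverse (fps_const ?u + fps_of_poly ?P)"
  have avu: "av ?u = (\<Prod>v\<in>V. av (x + v))" by (simp add: poly_PV av_prod add.commute)
  have u0: "?u \<noteq> 0" unfolding poly_PV using finV nz by (simp add: add.commute)
  have "(\<Sum>v\<in>V. inverse ((x + v) ^ Suc n)) = (-1) ^ n * (\<Sum>v\<in>V. (-1) ^ n / (x + v) ^ Suc n)"
    by (simp add: sum_distrib_left divide_inverse mult.assoc[symmetric] power_mult_distrib[symmetric])
  also have "\<dots> = (-1) ^ n * (?\<gamma> * ?W $ n)" using coeff_identity[OF nz] by simp
  finally have "av (\<Sum>v\<in>V. inverse ((x + v) ^ Suc n)) = av ?\<gamma> * av (?W $ n)" by simp
  moreover have "av (?W $ n) * \<sigma> ^ n \<le> inverse (av ?u)"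
  proof (rule inv_bound[OF u0 _ _ s(1)])
    show "fps_of_poly ?P $ 0 = 0" using PV_root[OF zV] by (simp add: poly_0_coeff_0)
    fix k
    have "av (coeff ?P k) * \<sigma> ^ k \<le> (\<Prod>v\<in>V. max \<sigma> (av v))"
      unfolding PV_def using finV s by (intro gauss_prod) auto
    also have "\<dots> \<le> av ?u" unfolding avu
    proof (intro prod_mono conjI)
      fix v assume v: "v \<in> V"
      show "0 \<le> max \<sigma> (av v)" using s by simp
      show "max \<sigma> (av v) \<le> av (x + v)" using s(2) xmin[OF v] vle[OF v] by simp
    qed
    finally show "av (fps_of_poly ?P $ k) * \<sigma> ^ k \<le> av ?u" by simp
  qed
  moreover have "av ?\<gamma> * av x ^ 2 \<le> av ?u"
  proof -
    have z1: "(0::'c) \<noteq> 1" by simp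
    have "av ?\<gamma> = (\<Prod>v\<in>V - {0}. av v)" by (simp add: gamma_PV av_prod)
    also have "\<dots> = av 1 * (\<Prod>v\<in>V - {0} - {1}. av v)"
      using prod.remove[of "V - {0}" 1 av] finV one z1 by simp
    finally have g: "av ?\<gamma> = (\<Prod>v\<in>V - {0} - {1}. av v)" by simp
    have "av ?u = av (x + 0) * (\<Prod>v\<in>V - {0}. av (x + v))"
      unfolding avu using prod.remove[OF finV zV, of "\<lambda>v. av (x + v)"] by simp
    also have "(\<Prod>v\<in>V - {0}. av (x + v)) = av (x + 1) * (\<Prod>v\<in>V - {0} - {1}. av (x + v))"
      using prod.remove[of "V - {0}" 1 "\<lambda>v. av (x + v)"] finV one z1 by simp
    finally have u: "av ?u = av x * av (x + 1) * (\<Prod>v\<in>V - {0} - {1}. av (x + v))" by simp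
    have h2: "(\<Prod>v\<in>V - {0} - {1}. av v) \<le> (\<Prod>v\<in>V - {0} - {1}. av (x + v))"
      using vle by (intro prod_mono) (auto simp: nonneg)
    have h1: "av x * av x \<le> av x * av (x + 1)"
      using xmin[OF one] xpos by (intro mult_left_mono) auto
    have h3: "0 \<le> av x * av (x + 1)" using nonneg by simp
    have h4: "0 \<le> (\<Prod>v\<in>V - {0} - {1}. av v)" by (intro prod_nonneg) (simp add: nonneg)
    have "av x * av x * (\<Prod>v\<in>V - {0} - {1}. av v) \<le> av x * av (x + 1) * (\<Prod>v\<in>V - {0} - {1}. av (x + v))"
      by (rule mult_mono[OF h1 h2 h3 h4])
    thus ?thesis using g u by (simp add: power2_eq_square mult_ac)
  qed
  ultimately show ?thesis
  proof -
    assume a: "av (\<Sum>v\<in>V. inverse ((x + v) ^ Suc n)) = av ?\<gamma> * av (?W $ n)"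
      "av (?W $ n) * \<sigma> ^ n \<le> inverse (av ?u)" "av ?\<gamma> * av x ^ 2 \<le> av ?u"
    have upos: "av ?u > 0" using av_pos[OF u0] .
    have "av (\<Sum>v\<in>V. inverse ((x + v) ^ Suc n)) * \<sigma> ^ n = av ?\<gamma> * (av (?W $ n) * \<sigma> ^ n)"
      using a(1) by simp
    also have "\<dots> \<le> av ?\<gamma> * inverse (av ?u)" using a(2) by (intro mult_left_mono) (auto simp: nonneg)
    also have "\<dots> \<le> inverse (av x ^ 2)"
    proof -
      have x2: "av x ^ 2 > 0" using xpos by simp
      have "av ?\<gamma> * inverse (av ?u) * av x ^ 2 = (av ?\<gamma> * av x ^ 2) * inverse (av ?u)"
        by (simp only: mult_ac)
      also have "\<dots> \<le> av ?u * inverse (av ?u)"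
        using a(3) upos by (intro mult_right_mono) auto
      also have "\<dots> = 1" using upos by simp
      finally have "av ?\<gamma> * inverse (av ?u) * av x ^ 2 \<le> 1" .
      thus ?thesis using x2 by (simp only: inverse_eq_divide pos_le_divide_eq)
    qed
    finally show ?thesis .
  qed
qed

end


context Cset
begin

lemma addgrp_VV: "M \<ge> 1 \<Longrightarrow> addgrp (\<beta> ` VV M)"
proof
  assume M: "M \<ge> 1"
  show "finite (\<beta> ` VV M)" by (intro finite_imageI finite_VV)
  show "0 \<in> \<beta> ` VV M" using M by (auto simp: VV_def image_iff intro!: bexI[of _ 0])
  fix v w assume "v \<in> \<beta> ` VV M" "w \<in> \<beta> ` VV M"
  then obtain a b where ab: "a \<in> VV M" "b \<in> VV M" "v = \<beta> a" "w = \<beta> b" by auto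
  have "a + b \<in> VV M" using ab degree_add_le_max[of a b] by (auto simp: VV_def)
  hence "\<beta> (a + b) \<in> \<beta> ` VV M" by (rule imageI)
  thus "v + w \<in> \<beta> ` VV M" using ab by (simp only: beta_add)
next
  fix v assume "v \<in> \<beta> ` VV M"
  then obtain a where "a \<in> VV M" "v = \<beta> a" by auto
  thus "- v \<in> \<beta> ` VV M" by (auto simp: beta_minus[symmetric] VV_def)
qed

lemma one_VV: "M \<ge> 1 \<Longrightarrow> (1::'c) \<in> \<beta> ` VV M"
  by (rule image_eqI[of _ _ 1]) (auto simp: VV_def i_1)

lemma inj_beta: "inj_on \<beta> S"
  by (auto intro: inj_onI beta_inj)

lemma bij_VV_shift: "degree (b0::'k poly) < M \<Longrightarrow> bij_betw (\<lambda>b. b0 + b) (VV M) (VV M)"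
  unfolding bij_betw_def
proof
  assume d: "degree b0 < M"
  show "inj_on (\<lambda>b. b0 + b) (VV M)" unfolding inj_on_def by simp
  show "(\<lambda>b. b0 + b) ` VV M = VV M"
  proof
    show "(\<lambda>b. b0 + b) ` VV M \<subseteq> VV M"
    proof
      fix u assume "u \<in> (\<lambda>b. b0 + b) ` VV M"
      then obtain b where b: "b \<in> VV M" "u = b0 + b" by auto
      thus "u \<in> VV M" using d degree_add_le_max[of b0 b] by (auto simp: VV_def)
    qed
    show "VV M \<subseteq> (\<lambda>b. b0 + b) ` VV M"
    proof
      fix u :: "'k poly" assume u: "u \<in> VV M"
      hence "u - b0 \<in> VV M" using d degree_diff_le_max[of u b0] by (auto simp: VV_def)
      moreover have "u = b0 + (u - b0)" by simp
      ultimately show "u \<in> (\<lambda>b. b0 + b) ` VV M" by blast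
    qed
  qed
qed

lemma carlitz_bound:
  assumes zd: "\<forall>f. av (z - \<iota> f) \<ge> \<delta>" and d0: "\<delta> > 0" and a: "a \<noteq> 0"
  shows "\<exists>M0. \<forall>M\<ge>M0. av (\<Sum>b\<in>VV M. \<beta> a * (- \<beta> a) ^ n / (\<beta> a * z + \<beta> b) ^ Suc n) * \<delta> ^ n
            \<le> inverse (av (\<beta> a) * \<delta> ^ 2)"
proof -
  let ?x = "\<beta> a * z"
  obtain b0 where b0: "\<And>b. av (?x + \<beta> b0) \<le> av (?x + \<beta> b)" using reduce by blast
  let ?x' = "?x + \<beta> b0"
  let ?A = "av (\<beta> a)"
  have Apos: "?A > 0" using a by (simp add: av_pos)
  let ?\<sigma> = "?A * \<delta>"
  have spos: "?\<sigma> > 0" using Apos d0 by simp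
  have sle: "?\<sigma> \<le> av ?x'" using dist_scaled[OF zd a] .
  have "av (\<Sum>b\<in>VV M. \<beta> a * (- \<beta> a) ^ n / (\<beta> a * z + \<beta> b) ^ Suc n) * \<delta> ^ n
            \<le> inverse (?A * \<delta> ^ 2)" if M: "M \<ge> max 1 (Suc (degree b0))" for M
  proof -
    have M1: "M \<ge> 1" and Mb: "degree b0 < M" using M by auto
    let ?V = "\<beta> ` VV M"
    have "(\<Sum>b\<in>VV M. inverse ((?x + \<beta> b) ^ Suc n)) = (\<Sum>b\<in>VV M. inverse ((?x + \<beta> (b0 + b)) ^ Suc n))"
      using sum.reindex_bij_betw[OF bij_VV_shift[OF Mb], of "\<lambda>b. inverse ((?x + \<beta> b) ^ Suc n)"] by simp
    also have "\<dots> = (\<Sum>b\<in>VV M. inverse ((?x' + \<beta> b) ^ Suc n))" by (simp add: beta_add add.assoc)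
    also have "\<dots> = (\<Sum>v\<in>?V. inverse ((?x' + v) ^ Suc n))"
      by (simp add: sum.reindex[OF inj_beta])
    finally have eqs: "(\<Sum>b\<in>VV M. inverse ((?x + \<beta> b) ^ Suc n)) = (\<Sum>v\<in>?V. inverse ((?x' + v) ^ Suc n))" .
    have est: "av (\<Sum>v\<in>?V. inverse ((?x' + v) ^ Suc n)) * ?\<sigma> ^ n \<le> inverse (av ?x' ^ 2)"
    proof (rule main_est[OF addgrp_VV[OF M1] one_VV[OF M1] _ spos sle])
      fix v assume "v \<in> ?V"
      then obtain b where "v = \<beta> b" by auto
      thus "av ?x' \<le> av (?x' + v)" using b0[of "b0 + b"] by (simp add: beta_add add.assoc)
    qed
    have "inverse (av ?x' ^ 2) \<le> inverse (?\<sigma> ^ 2)"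
      using sle spos by (intro le_imp_inverse_le power_mono) auto
    with est have est2: "av (\<Sum>v\<in>?V. inverse ((?x' + v) ^ Suc n)) * ?\<sigma> ^ n \<le> inverse (?\<sigma> ^ 2)" by linarith
    have "(\<Sum>b\<in>VV M. \<beta> a * (- \<beta> a) ^ n / (\<beta> a * z + \<beta> b) ^ Suc n)
          = \<beta> a * (- \<beta> a) ^ n * (\<Sum>b\<in>VV M. inverse ((?x + \<beta> b) ^ Suc n))"
      by (simp add: sum_distrib_left divide_inverse)
    hence "av (\<Sum>b\<in>VV M. \<beta> a * (- \<beta> a) ^ n / (\<beta> a * z + \<beta> b) ^ Suc n) * \<delta> ^ n
          = ?A * (av (\<Sum>v\<in>?V. inverse ((?x' + v) ^ Suc n)) * ?\<sigma> ^ n)"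
      unfolding eqs by (simp add: power_mult_distrib mult_ac)
    also have "\<dots> \<le> ?A * inverse (?\<sigma> ^ 2)" using est2 Apos by (intro mult_left_mono) auto
    also have "\<dots> = inverse (?A * \<delta> ^ 2)" using Apos by (simp add: power2_eq_square field_simps)
    finally show ?thesis .
  qed
  thus ?thesis by blast
qed

end

lemma geo_small:
  fixes \<rho> C :: real
  assumes "0 \<le> \<rho>" "\<rho> < 1" "C \<ge> 0" "e > 0"
  shows "\<exists>K. \<forall>n\<ge>K. C * \<rho> ^ n < e"
proof -
  obtain K where K: "\<rho> ^ K < e / (C + 1)"
    using real_arch_pow_inv[of "e / (C + 1)" \<rho>] assms by auto
  have "C * \<rho> ^ n < e" if "n \<ge> K" for n
  proof -
    have "\<rho> ^ n \<le> \<rho> ^ K" using that assms by (intro power_decreasing) auto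
    hence "\<rho> ^ n < e / (C + 1)" using K by linarith
    hence "(C + 1) * \<rho> ^ n < e" using assms by (simp add: field_simps)
    moreover have "C * \<rho> ^ n \<le> (C + 1) * \<rho> ^ n" using assms by (intro mult_right_mono) auto
    ultimately show ?thesis by linarith
  qed
  thus ?thesis by blast
qed

locale Cz = Cset av \<iota> for av :: "'c::field \<Rightarrow> real" and \<iota> :: "'k::{finite,field} fls \<Rightarrow> 'c" +
  fixes z :: 'c and \<delta> :: real
  assumes zd: "\<forall>f. av (z - \<iota> f) \<ge> \<delta>" and d0: "\<delta> > 0" and d1: "\<delta> \<le> 1"
begin

definition tt :: "'k poly \<Rightarrow> 'k poly \<Rightarrow> nat \<Rightarrow> 'c" where
  "tt a b n = \<beta> a * (- \<beta> a) ^ n / (\<beta> a * z + \<beta> b) ^ Suc n"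

definition gg :: "'k poly \<Rightarrow> nat \<Rightarrow> 'c" where
  "gg a n = av_lim av (\<lambda>M. \<Sum>b\<in>VV M. tt a b n)"

definition CC :: "nat \<Rightarrow> 'c" where
  "CC n = av_lim av (\<lambda>N. \<Sum>a\<in>Mon N. gg a n)"

lemma inner_conv:
  assumes a: "a \<noteq> 0"
  shows "\<exists>M1. \<forall>n. av_conv av (\<lambda>M. \<Sum>b\<in>VV M. tt a b n) (gg a n) \<and>
            (\<forall>M\<ge>M1. av (gg a n - (\<Sum>b\<in>VV M. tt a b n)) \<le> av (\<beta> a) * inverse (real CARD('k) ^ M))"
proof -
  let ?A = "av (\<beta> a)"
  have Apos: "?A > 0" using a by (simp add: av_pos)
  obtain K where K: "av (\<beta> a * z) + ?A < real CARD('k) ^ K"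
    using real_arch_pow[of "real CARD('k)" "av (\<beta> a * z) + ?A"] qq_ge2 by auto
  let ?M1 = "Suc K"
  have qK: "real CARD('k) ^ K \<le> real CARD('k) ^ N" if "N \<ge> K" for N
    using that qq_ge2 by (intro power_increasing) auto
  have "av_conv av (\<lambda>M. \<Sum>b\<in>VV M. tt a b n) (gg a n) \<and>
        (\<forall>M\<ge>?M1. av (gg a n - (\<Sum>b\<in>VV M. tt a b n)) \<le> ?A * inverse (real CARD('k) ^ M))" for n
  proof -
    let ?S = "\<lambda>M. \<Sum>b\<in>VV M. tt a b n"
    let ?B = "\<lambda>M. ?A * inverse (real CARD('k) ^ M)"
    have tb: "av (tt a b n) \<le> ?B N" if "N \<ge> ?M1" "b \<notin> VV N" for N b
    proof -
      have db: "degree b \<ge> N" using that by (simp add: VV_def)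
      hence b0: "b \<noteq> 0" using that by auto
      have bb: "av (\<beta> b) = real CARD('k) ^ degree b" by (rule av_beta[OF b0])
      have "real CARD('k) ^ N \<le> real CARD('k) ^ degree b" using db qq_ge2 by (intro power_increasing) auto
      hence qN: "real CARD('k) ^ N \<le> av (\<beta> b)" using bb by simp
      have "real CARD('k) ^ K \<le> real CARD('k) ^ N" using that qK by simp
      hence lt: "av (\<beta> a * z) + ?A < av (\<beta> b)" using K qN by linarith
      hence xb: "av (\<beta> a * z + \<beta> b) = av (\<beta> b)" using Apos by (intro av_add_eq) auto
      have bpos: "av (\<beta> b) > 0" using b0 by (simp add: av_pos)
      let ?r = "?A / av (\<beta> b)"
      have r1: "?r \<le> 1" using lt Apos nonneg[of "\<beta> a * z"] bpos by (simp add: divide_le_eq)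
      have r0: "?r \<ge> 0" using Apos bpos by simp
      have "av (tt a b n) = ?r ^ Suc n" unfolding tt_def using xb by (simp add: power_divide)
      also have "\<dots> = ?r * ?r ^ n" by simp
      also have "\<dots> \<le> ?r * 1" using r0 r1 by (intro mult_left_mono power_le_one) auto
      also have "\<dots> = ?r" by simp
      also have "\<dots> \<le> ?B N" using qN Apos bpos
        by (simp add: divide_inverse qq_pos le_imp_inverse_le)
      finally show ?thesis .
    qed
    have "\<exists>L. av_conv av ?S L \<and> (\<forall>N\<ge>?M1. av (L - ?S N) \<le> ?B N)"
    proof (rule cauchy_conv)
      fix N m assume Nm: "N \<ge> ?M1" "m \<ge> N"
      have f: "finite (VV m :: 'k poly set)" by (rule finite_VV)
      have sub: "VV N \<subseteq> (VV m :: 'k poly set)" by (rule VV_mono[OF Nm(2)])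
      have "?S m - ?S N = (\<Sum>b\<in>VV m - VV N. tt a b n)"
        by (rule sum_diff[OF f sub, symmetric])
      thus "av (?S m - ?S N) \<le> ?B N"
        using tb[OF Nm(1)] Apos qq_pos by (auto intro!: av_sum_le)
    next
      fix e :: real assume "e > 0"
      then obtain N where N: "inverse (real CARD('k) ^ N) < e / ?A" using inv_pow_small[of "e / ?A"] Apos \<open>e > 0\<close> by auto
      have "?B n' < e" if "n' \<ge> N" for n'
      proof -
        have "inverse (real CARD('k) ^ n') \<le> inverse (real CARD('k) ^ N)"
          using that qq_ge2 by (intro le_imp_inverse_le power_increasing) auto
        hence "inverse (real CARD('k) ^ n') < e / ?A" using N by linarith
        thus ?thesis using Apos by (simp add: field_simps)
      qed
      thus "\<exists>N. \<forall>n\<ge>N. ?B n < e" by blast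
    qed
    then obtain L where L: "av_conv av ?S L" "\<forall>N\<ge>?M1. av (L - ?S N) \<le> ?B N" by blast
    have "gg a n = L" unfolding gg_def by (rule av_lim_eq[OF L(1)])
    thus ?thesis using L by simp
  qed
  thus ?thesis by blast
qed

lemma gg_bound:
  assumes a: "a \<noteq> 0"
  shows "av (gg a n) * \<delta> ^ n \<le> inverse (av (\<beta> a) * \<delta> ^ 2)"
proof -
  obtain M1 where M1: "\<forall>n. av_conv av (\<lambda>M. \<Sum>b\<in>VV M. tt a b n) (gg a n)" using inner_conv[OF a] by blast
  obtain M0 where M0: "\<forall>M\<ge>M0. av (\<Sum>b\<in>VV M. tt a b n) * \<delta> ^ n \<le> inverse (av (\<beta> a) * \<delta> ^ 2)"
    using carlitz_bound[OF zd d0 a, of n] unfolding tt_def by blast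
  have dn: "\<delta> ^ n > 0" using d0 by simp
  have "av (gg a n - 0) \<le> inverse (av (\<beta> a) * \<delta> ^ 2) / \<delta> ^ n"
  proof (rule conv_limit_bound[OF M1[rule_format, of n], where N=M0])
    fix m assume "m \<ge> M0"
    thus "av ((\<Sum>b\<in>VV m. tt a b n) - 0) \<le> inverse (av (\<beta> a) * \<delta> ^ 2) / \<delta> ^ n"
      using M0 dn by (simp add: pos_le_divide_eq)
  qed
  thus ?thesis using dn by (simp add: pos_le_divide_eq)
qed

lemma inner_exp:
  assumes a: "a \<noteq> 0" and e: "av \<epsilon> < \<delta>"
  shows "\<exists>L. av_sums av (\<lambda>n. gg a n * \<epsilon> ^ n) L \<and>
             av_conv av (\<lambda>M. \<Sum>b\<in>VV M. \<beta> a / (\<beta> a * (z + \<epsilon>) + \<beta> b)) L"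
proof -
  let ?A = "av (\<beta> a)"
  have Apos: "?A > 0" using a by (simp add: av_pos)
  obtain M1 where M1: "\<And>n. av_conv av (\<lambda>M. \<Sum>b\<in>VV M. tt a b n) (gg a n)"
    "\<And>n M. M \<ge> M1 \<Longrightarrow> av (gg a n - (\<Sum>b\<in>VV M. tt a b n)) \<le> ?A * inverse (real CARD('k) ^ M)"
    using inner_conv[OF a] by blast
  have e1: "av \<epsilon> \<le> 1" using e d1 by simp
  show ?thesis
  proof (rule interchange[where Nz=M1 and B="\<lambda>M. ?A * inverse (real CARD('k) ^ M)"])
    fix M :: nat
    have "av_sums av (\<lambda>n. tt a b n * \<epsilon> ^ n) (\<beta> a / (\<beta> a * (z + \<epsilon>) + \<beta> b))" for b
    proof -
      let ?x = "\<beta> a * z + \<beta> b"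
      have xl: "av ?x \<ge> ?A * \<delta>" by (rule dist_scaled[OF zd a])
      have xpos: "av ?x > 0" using xl Apos d0 by (meson mult_pos_pos order.strict_trans2)
      hence x0: "?x \<noteq> 0" by auto
      let ?w = "- (\<beta> a * \<epsilon>) / ?x"
      have "av ?w = ?A * av \<epsilon> / av ?x" by simp
      also have "\<dots> < 1"
      proof -
        have "?A * av \<epsilon> < ?A * \<delta>" using e Apos by simp
        thus ?thesis using xl xpos by (simp add: divide_less_eq)
      qed
      finally have w1: "av ?w < 1" .
      have "av_sums av (\<lambda>n. (\<beta> a / ?x) * ?w ^ n) ((\<beta> a / ?x) * inverse (1 - ?w))"
        by (rule sums_const_mult[OF sums_geometric[OF w1]])
      moreover have "(\<lambda>n. (\<beta> a / ?x) * ?w ^ n) = (\<lambda>n. tt a b n * \<epsilon> ^ n)"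
      proof
        fix n
        have m: "- (\<beta> a * \<epsilon>) = (- \<beta> a) * \<epsilon>" by simp
        have "?w ^ n = ((- \<beta> a) * \<epsilon>) ^ n / ?x ^ n" by (simp only: m power_divide)
        also have "\<dots> = (- \<beta> a) ^ n * \<epsilon> ^ n / ?x ^ n" by (simp only: power_mult_distrib)
        finally have wn: "?w ^ n = (- \<beta> a) ^ n * \<epsilon> ^ n / ?x ^ n" .
        have xn: "?x ^ n \<noteq> 0" using x0 by simp
        show "(\<beta> a / ?x) * ?w ^ n = tt a b n * \<epsilon> ^ n"
          unfolding wn tt_def power_Suc using x0 xn by (simp add: field_simps)
      qed
      moreover have "(\<beta> a / ?x) * inverse (1 - ?w) = \<beta> a / (\<beta> a * (z + \<epsilon>) + \<beta> b)"
      proof -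
        have "1 - ?w = (?x + \<beta> a * \<epsilon>) / ?x" using x0 by (simp add: field_simps)
        hence "inverse (1 - ?w) = ?x / (?x + \<beta> a * \<epsilon>)" by simp
        moreover have "(\<beta> a / ?x) * (?x / (?x + \<beta> a * \<epsilon>)) = \<beta> a / (?x + \<beta> a * \<epsilon>)"
          using x0 by (cases "?x + \<beta> a * \<epsilon> = 0") simp_all
        moreover have "?x + \<beta> a * \<epsilon> = \<beta> a * (z + \<epsilon>) + \<beta> b" by (simp add: algebra_simps)
        ultimately show ?thesis by simp
      qed
      ultimately show ?thesis by simp
    qed
    hence "av_sums av (\<lambda>n. \<Sum>b\<in>VV M. tt a b n * \<epsilon> ^ n) (\<Sum>b\<in>VV M. \<beta> a / (\<beta> a * (z + \<epsilon>) + \<beta> b))"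
      by (intro sums_sum finite_VV)
    thus "av_sums av (\<lambda>n. (\<Sum>b\<in>VV M. tt a b n) * \<epsilon> ^ n) (\<Sum>b\<in>VV M. \<beta> a / (\<beta> a * (z + \<epsilon>) + \<beta> b))"
      by (simp add: sum_distrib_right)
  next
    fix M n :: nat assume "M \<ge> M1"
    have "av ((\<Sum>b\<in>VV M. tt a b n) * \<epsilon> ^ n - gg a n * \<epsilon> ^ n) = av (gg a n - (\<Sum>b\<in>VV M. tt a b n)) * av \<epsilon> ^ n"
      by (metis av_diff_comm av_power mult left_diff_distrib)
    also have "\<dots> \<le> av (gg a n - (\<Sum>b\<in>VV M. tt a b n)) * 1"
      using e1 nonneg by (intro mult_left_mono power_le_one) auto
    also have "\<dots> \<le> ?A * inverse (real CARD('k) ^ M)" using M1(2)[OF \<open>M \<ge> M1\<close>] by simp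
    finally show "av ((\<Sum>b\<in>VV M. tt a b n) * \<epsilon> ^ n - gg a n * \<epsilon> ^ n) \<le> ?A * inverse (real CARD('k) ^ M)" .
  next
    fix e :: real assume "e > 0"
    then obtain N where N: "inverse (real CARD('k) ^ N) < e / ?A" using inv_pow_small[of "e / ?A"] Apos \<open>e > 0\<close> by auto
    have "?A * inverse (real CARD('k) ^ n') < e" if "n' \<ge> N" for n'
    proof -
      have "inverse (real CARD('k) ^ n') \<le> inverse (real CARD('k) ^ N)"
        using that qq_ge2 by (intro le_imp_inverse_le power_increasing) auto
      hence "inverse (real CARD('k) ^ n') < e / ?A" using N by linarith
      thus ?thesis using Apos by (simp add: field_simps)
    qed
    thus "\<exists>N. \<forall>n\<ge>N. ?A * inverse (real CARD('k) ^ n) < e" by blast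
  next
    fix e :: real assume "e > 0"
    let ?C = "inverse (?A * \<delta> ^ 2)"
    let ?\<rho> = "av \<epsilon> / \<delta>"
    obtain K where K: "\<forall>n\<ge>K. ?C * ?\<rho> ^ n < e"
      using geo_small[of ?\<rho> ?C e] e d0 nonneg[of \<epsilon>] Apos \<open>e > 0\<close> by auto
    have "av (gg a n * \<epsilon> ^ n) \<le> ?C * ?\<rho> ^ n" for n
    proof -
      have "av (gg a n * \<epsilon> ^ n) = (av (gg a n) * \<delta> ^ n) * ?\<rho> ^ n"
        using d0 by (simp add: power_divide)
      also have "\<dots> \<le> ?C * ?\<rho> ^ n"
        using gg_bound[OF a, of n] d0 nonneg[of \<epsilon>] by (intro mult_right_mono) auto
      finally show ?thesis .
    qed
    thus "\<exists>K. \<forall>n\<ge>K. av (gg a n * \<epsilon> ^ n) < e" using K by (meson order.strict_trans1)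
  qed
qed

end


lemma lt_div_mult: "0 < (c::real) \<Longrightarrow> x < e / c \<Longrightarrow> x * c < e"
  by (simp add: pos_less_divide_eq)

context vfield
begin

lemma sums_terms_bounded:
  assumes "av_sums av f L"
  shows "\<exists>B. \<forall>k. av (f k) \<le> B"
proof -
  obtain N where N: "\<forall>n\<ge>N. av ((\<Sum>i<n. f i) - L) < 1"
    using assms unfolding av_sums_def av_conv_def by (meson zero_less_one)
  let ?B = "max 1 (\<Sum>k<N. av (f k))"
  have "av (f k) \<le> ?B" for k
  proof (cases "k < N")
    case True
    have "av (f k) \<le> (\<Sum>k<N. av (f k))"
      using True by (intro member_le_sum) (auto simp: nonneg)
    thus ?thesis by simp
  next
    case False
    have "f k = ((\<Sum>i<Suc k. f i) - L) - ((\<Sum>i<k. f i) - L)" by simp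
    moreover have "N \<le> Suc k" "N \<le> k" using False by auto
    hence "av ((\<Sum>i<Suc k. f i) - L) < 1" "av ((\<Sum>i<k. f i) - L) < 1" using N by blast+
    ultimately have "av (f k) \<le> 1" using av_diff_le by (metis max_less_iff_conj less_imp_le order.strict_trans1)
    thus ?thesis by simp
  qed
  thus ?thesis by blast
qed

lemma sums_drop_term:
  assumes "av_sums av f L"
  shows "av_sums av (\<lambda>k. if k = k0 then 0 else f k) (L - f k0)"
proof -
  have g: "av_sums av (\<lambda>k. if k = k0 then f k0 else 0) (f k0)"
    unfolding av_sums_def av_conv_def
  proof (intro allI impI)
    fix e :: real assume "e > 0"
    show "\<exists>N. \<forall>n\<ge>N. av ((\<Sum>k<n. if k = k0 then f k0 else 0) - f k0) < e"
    proof (intro exI[of _ "Suc k0"] allI impI)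
      fix n assume "n \<ge> Suc k0"
      hence "(\<Sum>k<n. if k = k0 then f k0 else 0) = f k0"
        by (subst sum.delta) auto
      thus "av ((\<Sum>k<n. if k = k0 then f k0 else 0) - f k0) < e" using \<open>e > 0\<close> by simp
    qed
  qed
  have "av_sums av (\<lambda>k. f k - (if k = k0 then f k0 else 0)) (L - f k0)"
    by (rule sums_diff[OF assms g])
  moreover have "(\<lambda>k. f k - (if k = k0 then f k0 else 0)) = (\<lambda>k. if k = k0 then 0 else f k)"
    by auto
  ultimately show ?thesis by simp
qed

lemma conv_pow_frob:
  assumes p: "prime CHAR('c)" and Q: "Q = CHAR('c) ^ i" and c: "av_conv av s L"
  shows "av_conv av (\<lambda>n. s n ^ Q) (L ^ Q)"
  unfolding av_conv_def
proof (intro allI impI)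
  fix e :: real assume "e > 0"
  have "CHAR('c) > 0" using p by (rule prime_gt_0_nat)
  hence "CHAR('c) ^ i > 0" by (rule zero_less_power)
  hence Q1: "Q \<ge> 1" by (metis Q One_nat_def Suc_leI)
  obtain N where N: "\<forall>n\<ge>N. av (s n - L) < min e 1" using c \<open>e > 0\<close> unfolding av_conv_def
    by (meson min_less_iff_conj zero_less_one)
  have "av (s n ^ Q - L ^ Q) < e" if "n \<ge> N" for n
  proof -
    have "(s n - L + L) ^ Q = (s n - L) ^ Q + L ^ Q" by (rule freshmans_dream'[OF p Q])
    hence eq: "s n ^ Q - L ^ Q = (s n - L) ^ Q" by simp
    have lt: "av (s n - L) < 1" "av (s n - L) < e" using N that by auto
    have "av (s n - L) ^ Q \<le> av (s n - L) ^ 1"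
      using lt Q1 nonneg by (intro power_decreasing) auto
    thus ?thesis using eq lt by simp
  qed
  thus "\<exists>N. \<forall>n\<ge>N. av (s n ^ Q - L ^ Q) < e" by blast
qed

end

context Cset
begin

lemma ps_unique:
  assumes r: "r > 0" "r' > 0"
    and c: "\<forall>\<epsilon>. av \<epsilon> < r \<longrightarrow> av_sums av (\<lambda>k. c k * \<epsilon> ^ k) (f \<epsilon>)"
    and c': "\<forall>\<epsilon>. av \<epsilon> < r' \<longrightarrow> av_sums av (\<lambda>k. c' k * \<epsilon> ^ k) (f \<epsilon>)"
  shows "c = c'"
proof (rule ccontr)
  assume ne: "c \<noteq> c'"
  define d where "d k = c k - c' k" for k
  have ds: "av_sums av (\<lambda>k. d k * \<epsilon> ^ k) 0" if "av \<epsilon> < min r r'" for \<epsilon>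
  proof -
    have "av_sums av (\<lambda>k. c k * \<epsilon> ^ k - c' k * \<epsilon> ^ k) (f \<epsilon> - f \<epsilon>)"
      using that c c' by (intro sums_diff) auto
    thus ?thesis by (simp add: d_def left_diff_distrib)
  qed
  have "\<exists>k. d k \<noteq> 0" using ne unfolding d_def by (auto simp: fun_eq_iff)
  define k0 where "k0 = (LEAST k. d k \<noteq> 0)"
  have dk0: "d k0 \<noteq> 0" unfolding k0_def using \<open>\<exists>k. d k \<noteq> 0\<close> by (rule LeastI_ex)
  have below: "d k = 0" if "k < k0" for k using that not_less_Least unfolding k0_def by blast
  let ?q = "real CARD('k)"
  define w where "w = \<iota> fls_X"
  have aw: "av w = inverse ?q" unfolding w_def using i_av[of fls_X] qq_pos by (simp add: powr_minus)
  have w0: "w \<noteq> 0" unfolding w_def by simp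
  obtain m where m: "inverse (?q ^ m) < min r r'" using inv_pow_small[of "min r r'"] r by auto
  define \<epsilon>0 where "\<epsilon>0 = w ^ m"
  have ae0: "av \<epsilon>0 = inverse (?q ^ m)" unfolding \<epsilon>0_def using aw by (simp add: power_inverse)
  have e00: "\<epsilon>0 \<noteq> 0" unfolding \<epsilon>0_def using w0 by simp
  obtain B where B: "\<forall>k. av (d k * \<epsilon>0 ^ k) \<le> B"
    using sums_terms_bounded[OF ds[of \<epsilon>0]] ae0 m by auto
  have key: "av (d k0 * \<epsilon>0 ^ k0) \<le> B * inverse (?q ^ j)" for j
  proof -
    define \<epsilon> where "\<epsilon> = \<epsilon>0 * w ^ j"
    have ae: "av \<epsilon> = inverse (?q ^ m) * inverse (?q) ^ j" unfolding \<epsilon>_def using ae0 aw by simp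
    have "inverse (?q) \<le> 1" using qq_ge2 by (simp add: inverse_le_1_iff)
    hence "inverse (?q) ^ j \<le> 1" using qq_pos by (intro power_le_one) auto
    hence "av \<epsilon> \<le> inverse (?q ^ m)" unfolding ae using qq_pos by (intro mult_left_le) auto
    hence "av \<epsilon> < min r r'" using m by linarith
    hence s: "av_sums av (\<lambda>k. if k = k0 then 0 else d k * \<epsilon> ^ k) (0 - d k0 * \<epsilon> ^ k0)"
      by (intro sums_drop_term ds)
    have Bnn: "B \<ge> 0" using B nonneg order_trans by blast
    have ij: "inverse (?q) ^ j \<ge> 0" "inverse (?q) ^ j \<le> 1" using qq_pos \<open>inverse (?q) ^ j \<le> 1\<close> by auto
    have "av (if k = k0 then 0 else d k * \<epsilon> ^ k) \<le> B * (inverse (?q) ^ j) ^ Suc k0" for k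
    proof (cases "k = k0 \<or> k < k0")
      case True then show ?thesis using below Bnn ij by auto
    next
      case False
      hence kk: "k \<ge> Suc k0" "k \<noteq> k0" by auto
      have "av (d k * \<epsilon> ^ k) = av (d k * \<epsilon>0 ^ k) * (inverse (?q) ^ j) ^ k"
        unfolding \<epsilon>_def using aw by (simp add: power_mult_distrib mult_ac power_mult[symmetric])
      also have "\<dots> \<le> B * (inverse (?q) ^ j) ^ Suc k0"
        using B ij kk nonneg Bnn by (intro mult_mono power_decreasing) auto
      finally show ?thesis using kk by simp
    qed
    hence "av (0 - d k0 * \<epsilon> ^ k0) \<le> B * (inverse (?q) ^ j) ^ Suc k0" by (intro sums_bound[OF s])
    hence "av (d k0 * \<epsilon>0 ^ k0) * (inverse (?q) ^ j) ^ k0 \<le> B * (inverse (?q) ^ j) ^ k0 * inverse (?q) ^ j"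
      unfolding \<epsilon>_def using aw by (simp add: power_mult_distrib mult_ac power_mult[symmetric])
    moreover have "(inverse (?q) ^ j) ^ k0 > 0" using qq_pos by simp
    ultimately have "av (d k0 * \<epsilon>0 ^ k0) \<le> B * inverse (?q) ^ j"
      by (simp add: mult_ac)
    thus ?thesis by (simp add: power_inverse)
  qed
  have "av (d k0 * \<epsilon>0 ^ k0) \<le> 0"
  proof (rule ccontr)
    assume "\<not> av (d k0 * \<epsilon>0 ^ k0) \<le> 0"
    hence pos: "av (d k0 * \<epsilon>0 ^ k0) > 0" by simp
    have Bpos: "B > 0" using key[of 0] pos by simp
    have "av (d k0 * \<epsilon>0 ^ k0) / B > 0" using pos Bpos by simp
    then obtain j where "inverse (?q ^ j) < av (d k0 * \<epsilon>0 ^ k0) / B" using inv_pow_small by blast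
    hence "B * inverse (?q ^ j) < av (d k0 * \<epsilon>0 ^ k0)" using Bpos by (simp add: field_simps)
    thus False using key[of j] by simp
  qed
  hence "d k0 * \<epsilon>0 ^ k0 = 0" by (rule av_sum_eq_zero)
  thus False using dk0 e00 by simp
qed

end

context Cz
begin

lemma Mon_nz: "(a :: 'k poly) \<in> Mon N \<Longrightarrow> a \<noteq> 0" by (auto simp: Mon_def)

lemma av_beta_Mon: "(a :: 'k poly) \<in> Mon N \<Longrightarrow> av (\<beta> a) = real CARD('k) ^ degree a"
  using av_beta Mon_nz by blast

lemma gg_bound2:
  assumes "a \<noteq> 0" "degree a \<ge> N"
  shows "av (gg a n) \<le> inverse (real CARD('k) ^ N) * inverse (\<delta> ^ 2) * inverse (\<delta> ^ n)"
proof -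
  have dn: "\<delta> ^ n > 0" using d0 by simp
  have "av (gg a n) * \<delta> ^ n \<le> inverse (av (\<beta> a) * \<delta> ^ 2)" by (rule gg_bound[OF assms(1)])
  also have "\<dots> \<le> inverse (real CARD('k) ^ N * \<delta> ^ 2)"
  proof (rule le_imp_inverse_le)
    show "real CARD('k) ^ N * \<delta> ^ 2 \<le> av (\<beta> a) * \<delta> ^ 2"
      using av_beta[OF assms(1)] assms(2) qq_ge2 d0 by (intro mult_right_mono power_increasing) auto
    show "0 < real CARD('k) ^ N * \<delta> ^ 2" using qq_pos d0 by simp
  qed
  finally have "av (gg a n) * \<delta> ^ n \<le> inverse (real CARD('k) ^ N * \<delta> ^ 2)" .
  hence "av (gg a n) \<le> inverse (real CARD('k) ^ N * \<delta> ^ 2) / \<delta> ^ n" using dn by (simp add: pos_le_divide_eq)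
  also have "\<dots> = inverse (real CARD('k) ^ N) * inverse (\<delta> ^ 2) * inverse (\<delta> ^ n)"
    by (simp add: divide_inverse inverse_mult_distrib mult_ac)
  finally show ?thesis .
qed

lemma CC_conv:
  "av_conv av (\<lambda>N. \<Sum>a\<in>Mon N. gg a n) (CC n) \<and>
   (\<forall>N. av (CC n - (\<Sum>a\<in>Mon N. gg a n)) \<le> inverse (real CARD('k) ^ N) * inverse (\<delta> ^ 2) * inverse (\<delta> ^ n))"
proof -
  let ?S = "\<lambda>N. \<Sum>a\<in>Mon N. gg a n"
  let ?c = "inverse (\<delta> ^ 2) * inverse (\<delta> ^ n)"
  have cpos: "?c > 0" using d0 by simp
  have "\<exists>L. av_conv av ?S L \<and> (\<forall>N\<ge>0. av (L - ?S N) \<le> inverse (real CARD('k) ^ N) * ?c)"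
  proof (rule cauchy_conv)
    fix N m :: nat assume Nm: "N \<ge> 0" "m \<ge> N"
    have f: "finite (Mon m :: 'k poly set)" by (rule finite_Mon)
    have sub: "Mon N \<subseteq> (Mon m :: 'k poly set)" by (rule Mon_mono[OF Nm(2)])
    have "?S m - ?S N = (\<Sum>a\<in>Mon m - Mon N. gg a n)" by (rule sum_diff[OF f sub, symmetric])
    moreover have "av (gg a n) \<le> inverse (real CARD('k) ^ N) * ?c" if "a \<in> Mon m - Mon N" for a
    proof -
      have "a \<noteq> 0" "degree a \<ge> N" using that by (auto simp: Mon_def)
      thus ?thesis using gg_bound2 by (simp add: mult.assoc)
    qed
    ultimately show "av (?S m - ?S N) \<le> inverse (real CARD('k) ^ N) * ?c"
      using cpos qq_pos by (auto intro!: av_sum_le)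
  next
    fix e :: real assume "e > 0"
    then obtain N where N: "inverse (real CARD('k) ^ N) < e / ?c" using inv_pow_small[of "e / ?c"] cpos by auto
    have "inverse (real CARD('k) ^ n') * ?c < e" if "n' \<ge> N" for n'
    proof -
      have "inverse (real CARD('k) ^ n') \<le> inverse (real CARD('k) ^ N)"
        using that qq_ge2 by (intro le_imp_inverse_le power_increasing) auto
      hence "inverse (real CARD('k) ^ n') < e / ?c" using N by linarith
      thus ?thesis by (rule lt_div_mult[OF cpos])
    qed
    thus "\<exists>N. \<forall>n\<ge>N. inverse (real CARD('k) ^ n) * ?c < e" by blast
  qed
  then obtain L where L: "av_conv av ?S L" "\<forall>N. av (L - ?S N) \<le> inverse (real CARD('k) ^ N) * ?c" by auto
  have "CC n = L" unfolding CC_def by (rule av_lim_eq[OF L(1)])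
  thus ?thesis using L by (simp add: mult.assoc)
qed

lemma CC_bound: "av (CC n) * \<delta> ^ n \<le> inverse (\<delta> ^ 2)"
proof -
  have dn: "\<delta> ^ n > 0" using d0 by simp
  have "av (CC n - 0) \<le> inverse (\<delta> ^ 2) * inverse (\<delta> ^ n)"
  proof (rule conv_limit_bound[where N=0])
    show "av_conv av (\<lambda>N. \<Sum>a\<in>Mon N. gg a n) (CC n)" using CC_conv by blast
    fix N :: nat
    have "av (gg a n) \<le> inverse (\<delta> ^ 2) * inverse (\<delta> ^ n)" if "a \<in> Mon N" for a
      using gg_bound2[of a 0 n] Mon_nz[OF that] by simp
    thus "av ((\<Sum>a\<in>Mon N. gg a n) - 0) \<le> inverse (\<delta> ^ 2) * inverse (\<delta> ^ n)"
      using d0 by (auto intro!: av_sum_le)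
  qed
  hence "av (CC n) * \<delta> ^ n \<le> (inverse (\<delta> ^ 2) * inverse (\<delta> ^ n)) * \<delta> ^ n"
    using dn by (intro mult_right_mono) auto
  also have "\<dots> = inverse (\<delta> ^ 2)" using d0 by simp
  finally show ?thesis .
qed

lemma outer_exp:
  assumes e: "av \<epsilon> < \<delta>"
  shows "\<exists>L. av_sums av (\<lambda>n. CC n * \<epsilon> ^ n) L \<and>
             av_conv av (\<lambda>N. \<Sum>a\<in>Mon N. av_lim av (\<lambda>M. \<Sum>b\<in>VV M. \<beta> a / (\<beta> a * (z + \<epsilon>) + \<beta> b))) L"
proof -
  let ?Li = "\<lambda>a. av_lim av (\<lambda>M. \<Sum>b\<in>VV M. \<beta> a / (\<beta> a * (z + \<epsilon>) + \<beta> b))"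
  have Li: "av_sums av (\<lambda>n. gg a n * \<epsilon> ^ n) (?Li a)" if a0: "a \<noteq> 0" for a
  proof -
    obtain L where L: "av_sums av (\<lambda>n. gg a n * \<epsilon> ^ n) L"
      "av_conv av (\<lambda>M. \<Sum>b\<in>VV M. \<beta> a / (\<beta> a * (z + \<epsilon>) + \<beta> b)) L"
      using inner_exp[OF a0 e] by blast
    thus ?thesis using av_lim_eq[OF L(2)] by simp
  qed
  have rho: "av \<epsilon> / \<delta> < 1" "av \<epsilon> / \<delta> \<ge> 0" using e d0 nonneg[of \<epsilon>] by auto
  have pw: "(av \<epsilon> / \<delta>) ^ n \<le> 1" for n using rho by (intro power_le_one) auto
  show ?thesis
  proof (rule interchange[where Nz=0 and B="\<lambda>N. inverse (real CARD('k) ^ N) * inverse (\<delta> ^ 2)"])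
    fix N :: nat
    have "av_sums av (\<lambda>n. \<Sum>a\<in>Mon N. gg a n * \<epsilon> ^ n) (\<Sum>a\<in>Mon N. ?Li a)"
      by (intro sums_sum finite_Mon Li) (auto simp: Mon_def)
    thus "av_sums av (\<lambda>n. (\<Sum>a\<in>Mon N. gg a n) * \<epsilon> ^ n) (\<Sum>a\<in>Mon N. ?Li a)"
      by (simp add: sum_distrib_right)
  next
    fix N n :: nat
    have "av ((\<Sum>a\<in>Mon N. gg a n) * \<epsilon> ^ n - CC n * \<epsilon> ^ n) = av (CC n - (\<Sum>a\<in>Mon N. gg a n)) * av \<epsilon> ^ n"
      by (metis av_diff_comm av_power mult left_diff_distrib)
    also have "\<dots> \<le> inverse (real CARD('k) ^ N) * inverse (\<delta> ^ 2) * inverse (\<delta> ^ n) * av \<epsilon> ^ n"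
      using CC_conv nonneg by (intro mult_right_mono) auto
    also have "\<dots> = inverse (real CARD('k) ^ N) * inverse (\<delta> ^ 2) * (av \<epsilon> / \<delta>) ^ n"
      by (simp add: power_divide field_simps)
    also have "\<dots> \<le> inverse (real CARD('k) ^ N) * inverse (\<delta> ^ 2) * 1"
      using pw qq_pos d0 by (intro mult_left_mono) auto
    finally show "av ((\<Sum>a\<in>Mon N. gg a n) * \<epsilon> ^ n - CC n * \<epsilon> ^ n) \<le> inverse (real CARD('k) ^ N) * inverse (\<delta> ^ 2)"
      by simp
  next
    fix e :: real assume "e > 0"
    let ?c = "inverse (\<delta> ^ 2)"
    have cpos: "?c > 0" using d0 by simp
    obtain N where N: "inverse (real CARD('k) ^ N) < e / ?c" using inv_pow_small[of "e / ?c"] cpos \<open>e > 0\<close> by auto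
    have "inverse (real CARD('k) ^ n') * ?c < e" if "n' \<ge> N" for n'
    proof -
      have "inverse (real CARD('k) ^ n') \<le> inverse (real CARD('k) ^ N)"
        using that qq_ge2 by (intro le_imp_inverse_le power_increasing) auto
      hence "inverse (real CARD('k) ^ n') < e / ?c" using N by linarith
      thus ?thesis by (rule lt_div_mult[OF cpos])
    qed
    thus "\<exists>N. \<forall>n\<ge>N. inverse (real CARD('k) ^ n) * ?c < e" by blast
  next
    fix e :: real assume "e > 0"
    let ?C = "inverse (\<delta> ^ 2)"
    let ?\<rho> = "av \<epsilon> / \<delta>"
    obtain K where K: "\<forall>n\<ge>K. ?C * ?\<rho> ^ n < e"
      using geo_small[of ?\<rho> ?C e] rho d0 \<open>e > 0\<close> by auto
    have "av (CC n * \<epsilon> ^ n) \<le> ?C * ?\<rho> ^ n" for n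
    proof -
      have "av (CC n * \<epsilon> ^ n) = (av (CC n) * \<delta> ^ n) * ?\<rho> ^ n"
        using d0 by (simp add: power_divide)
      also have "\<dots> \<le> ?C * ?\<rho> ^ n"
        using CC_bound[of n] rho by (intro mult_right_mono) auto
      finally show ?thesis .
    qed
    thus "\<exists>K. \<forall>n\<ge>K. av (CC n * \<epsilon> ^ n) < e" using K by (meson order.strict_trans1)
  qed
qed

end


context Cz
begin

lemma tt_frob:
  assumes Q: "Q = CHAR('k) ^ i"
  shows "tt a b (Q - 1) = (-1) ^ (Q - 1) * (tt a b 0) ^ Q"
proof -
  have "CHAR('k) > 0" using prime_CHAR_c CHAR_c prime_gt_0_nat by metis
  hence "CHAR('k) ^ i > 0" by (rule zero_less_power)
  hence Q1: "Q \<ge> 1" by (metis Q One_nat_def Suc_leI)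
  then obtain k where k: "Q = Suc k" by (metis Suc_pred' less_le_trans zero_less_one)
  let ?x = "\<beta> a * z + \<beta> b"
  have "tt a b (Q - 1) = \<beta> a * (- \<beta> a) ^ k / ?x ^ Suc k" unfolding tt_def k by simp
  also have "\<dots> = (-1) ^ k * (\<beta> a * \<beta> a ^ k) / ?x ^ Suc k"
    by (simp add: power_minus[of "\<beta> a"] mult_ac)
  also have "\<dots> = (-1) ^ k * (\<beta> a / ?x) ^ Suc k" by (simp add: power_divide)
  finally show ?thesis unfolding k tt_def by simp
qed

lemma frob_facts:
  assumes Q: "Q = CHAR('k) ^ i"
  shows "prime CHAR('c)" "Q = CHAR('c) ^ i"
  using prime_CHAR_c CHAR_c Q by auto

lemma gg_frob:
  assumes Q: "Q = CHAR('k) ^ i" and a: "a \<noteq> 0"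
  shows "gg a (Q - 1) = (-1) ^ (Q - 1) * (gg a 0) ^ Q"
proof -
  obtain M1 where M1: "\<forall>n. av_conv av (\<lambda>M. \<Sum>b\<in>VV M. tt a b n) (gg a n)" using inner_conv[OF a] by blast
  have "av_conv av (\<lambda>M. (\<Sum>b\<in>VV M. tt a b 0) ^ Q) ((gg a 0) ^ Q)"
    by (rule conv_pow_frob[OF frob_facts[OF Q] M1[rule_format, of 0]])
  hence "av_conv av (\<lambda>M. (-1) ^ (Q - 1) * (\<Sum>b\<in>VV M. tt a b 0) ^ Q) ((-1) ^ (Q - 1) * (gg a 0) ^ Q)"
    by (rule conv_const_mult)
  moreover have "(\<lambda>M. (-1) ^ (Q - 1) * (\<Sum>b\<in>VV M. tt a b 0) ^ Q) = (\<lambda>M. \<Sum>b\<in>VV M. tt a b (Q - 1))"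
  proof
    fix M
    have "(\<Sum>b\<in>VV M. tt a b 0) ^ Q = (\<Sum>b\<in>VV M. tt a b 0 ^ Q)"
      by (rule freshmans_dream_sum'[OF frob_facts[OF Q]])
    hence "(-1) ^ (Q - 1) * (\<Sum>b\<in>VV M. tt a b 0) ^ Q = (\<Sum>b\<in>VV M. (-1) ^ (Q - 1) * tt a b 0 ^ Q)"
      by (simp only: sum_distrib_left)
    also have "\<dots> = (\<Sum>b\<in>VV M. tt a b (Q - 1))"
      by (intro sum.cong refl) (rule tt_frob[OF Q, symmetric])
    finally show "(-1) ^ (Q - 1) * (\<Sum>b\<in>VV M. tt a b 0) ^ Q = (\<Sum>b\<in>VV M. tt a b (Q - 1))" .
  qed
  ultimately have "av_conv av (\<lambda>M. \<Sum>b\<in>VV M. tt a b (Q - 1)) ((-1) ^ (Q - 1) * (gg a 0) ^ Q)" by simp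
  thus ?thesis using M1 conv_unique by blast
qed

lemma CC_frob:
  assumes Q: "Q = CHAR('k) ^ i"
  shows "CC (Q - 1) = (-1) ^ (Q - 1) * (CC 0) ^ Q"
proof -
  have c0: "av_conv av (\<lambda>N. \<Sum>a\<in>Mon N. gg a 0) (CC 0)" using CC_conv by blast
  have "av_conv av (\<lambda>N. (\<Sum>a\<in>Mon N. gg a 0) ^ Q) ((CC 0) ^ Q)"
    by (rule conv_pow_frob[OF frob_facts[OF Q] c0])
  hence "av_conv av (\<lambda>N. (-1) ^ (Q - 1) * (\<Sum>a\<in>Mon N. gg a 0) ^ Q) ((-1) ^ (Q - 1) * (CC 0) ^ Q)"
    by (rule conv_const_mult)
  moreover have "(\<lambda>N. (-1) ^ (Q - 1) * (\<Sum>a\<in>Mon N. gg a 0) ^ Q) = (\<lambda>N. \<Sum>a\<in>Mon N. gg a (Q - 1))"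
  proof
    fix N
    have "(\<Sum>a\<in>Mon N. gg a 0) ^ Q = (\<Sum>a\<in>Mon N. gg a 0 ^ Q)"
      by (rule freshmans_dream_sum'[OF frob_facts[OF Q]])
    also have "(-1) ^ (Q - 1) * \<dots> = (\<Sum>a\<in>Mon N. gg a (Q - 1))"
      unfolding sum_distrib_left by (intro sum.cong refl) (metis gg_frob[OF Q] Mon_nz)
    finally show "(-1) ^ (Q - 1) * (\<Sum>a\<in>Mon N. gg a 0) ^ Q = (\<Sum>a\<in>Mon N. gg a (Q - 1))" .
  qed
  moreover have "av_conv av (\<lambda>N. \<Sum>a\<in>Mon N. gg a (Q - 1)) (CC (Q - 1))" using CC_conv by blast
  ultimately show ?thesis using conv_unique by auto
qed

lemma Eis_z: "Eis av \<iota> pibar z = inverse pibar * CC 0"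
proof -
  have "(\<lambda>N. \<Sum>a\<in>{a::'k poly. lead_coeff a = 1 \<and> degree a < N}.
           av_lim av (\<lambda>M. \<Sum>b\<in>{b::'k poly. degree b < M}. \<beta> a / (\<beta> a * z + \<beta> b)))
        = (\<lambda>N. \<Sum>a\<in>Mon N. gg a 0)"
    unfolding Mon_def[symmetric] VV_def[symmetric] gg_def tt_def by simp
  thus ?thesis unfolding Eis_def CC_def by simp
qed

lemma Eis_exp:
  assumes e: "av \<epsilon> < \<delta>"
  shows "av_sums av (\<lambda>k. (inverse pibar * CC k) * \<epsilon> ^ k) (Eis av \<iota> pibar (z + \<epsilon>))"
proof -
  obtain L where L: "av_sums av (\<lambda>n. CC n * \<epsilon> ^ n) L"
    "av_conv av (\<lambda>N. \<Sum>a\<in>Mon N. av_lim av (\<lambda>M. \<Sum>b\<in>VV M. \<beta> a / (\<beta> a * (z + \<epsilon>) + \<beta> b))) L"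
    using outer_exp[OF e] by blast
  have "Eis av \<iota> pibar (z + \<epsilon>) = inverse pibar * L"
    unfolding Eis_def Mon_def[symmetric] VV_def[symmetric] using av_lim_eq[OF L(2)] by simp
  thus ?thesis using sums_const_mult[OF L(1), of "inverse pibar"] by (simp add: mult.assoc)
qed

end

lemma final_algebra:
  fixes p E :: "'c::field"
  assumes "p \<noteq> 0" "Q = Suc k"
  shows "inverse ((- p) ^ (Q - 1)) * (inverse p * ((-1) ^ (Q - 1) * (p * E) ^ Q)) = E ^ Q"
proof -
  have m: "(- p) ^ k = (-1) ^ k * p ^ k" by (rule power_minus)
  have n1: "((-1::'c) ^ k) \<noteq> 0" by simp
  have "inverse ((- p) ^ k) * (inverse p * ((-1) ^ k * (p * E) ^ Suc k))
        = ((-1) ^ k * inverse ((-1) ^ k)) * ((p * inverse p) * (p ^ k * inverse (p ^ k))) * E ^ Suc k"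
    unfolding m by (simp add: power_mult_distrib inverse_mult_distrib mult_ac)
  also have "\<dots> = E ^ Suc k"
  proof -
    have "(-1::'c) ^ k * inverse ((-1) ^ k) = 1" using n1 by simp
    moreover have "p * inverse p = 1" "p ^ k * inverse (p ^ k) = 1" using assms(1) by simp_all
    ultimately show ?thesis by simp
  qed
  finally show ?thesis using assms(2) by simp
qed

theorem lemma8:
  fixes av :: "'c::field \<Rightarrow> real" and \<iota> :: "'k::{finite,field} fls \<Rightarrow> 'c"
    and pibar :: 'c and z :: 'c and i :: nat
  assumes "is_C av \<iota>"
    and "fundamental_period av \<iota> pibar"
    and "z \<in> Omega \<iota>"
  shows "inverse ((- pibar) ^ (CHAR('k) ^ i - 1)) * hyperderiv av (Eis av \<iota> pibar) (CHAR('k) ^ i - 1) z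
           = (Eis av \<iota> pibar z) ^ (CHAR('k) ^ i)"
proof -
  interpret Cset av \<iota>
    using assms(1) unfolding is_C_def by unfold_locales auto
  have zr: "z \<notin> range \<iota>" using assms(3) by (simp add: Omega_def)
  obtain \<delta> where d: "\<delta> > 0" "\<delta> \<le> 1" "\<forall>f. av (z - \<iota> f) \<ge> \<delta>" using dist_pos[OF zr] by blast
  interpret Cz av \<iota> z \<delta> by unfold_locales (use d in auto)
  have p0: "pibar \<noteq> 0" using assms(2) by (simp add: fundamental_period_def)
  let ?Q = "CHAR('k) ^ i"
  have "CHAR('k) > 0" using prime_CHAR_c CHAR_c prime_gt_0_nat by metis
  hence "CHAR('k) ^ i > 0" by (rule zero_less_power)
  then obtain k where k: "?Q = Suc k" by (metis Suc_pred')
  define c0 where "c0 k = inverse pibar * CC k" for k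
  let ?P = "\<lambda>c. \<exists>r>0. \<forall>\<epsilon>. av \<epsilon> < r \<longrightarrow> av_sums av (\<lambda>k. c k * \<epsilon> ^ k) (Eis av \<iota> pibar (z + \<epsilon>))"
  have Pc0: "?P c0" unfolding c0_def using Eis_exp d(1) by blast
  have "(THE c. ?P c) = c0"
  proof (rule the_equality)
    show "?P c0" by (rule Pc0)
    fix c assume "?P c"
    then obtain r where r: "r > 0" "\<forall>\<epsilon>. av \<epsilon> < r \<longrightarrow> av_sums av (\<lambda>k. c k * \<epsilon> ^ k) (Eis av \<iota> pibar (z + \<epsilon>))"
      by blast
    show "c = c0"
      by (rule ps_unique[OF r(1) d(1) r(2)]) (use Eis_exp in \<open>simp add: c0_def\<close>)
  qed
  hence hd: "hyperderiv av (Eis av \<iota> pibar) (?Q - 1) z = inverse pibar * CC (?Q - 1)"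
    unfolding hyperderiv_def c0_def by simp
  have E: "CC 0 = pibar * Eis av \<iota> pibar z" using Eis_z p0 by simp
  show ?thesis unfolding hd CC_frob[OF refl] E
    by (rule final_algebra[OF p0 k])
qed


end
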